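(* For any three-user finite-field MWRC with correlated sources (as in the context), the minimum source-channel rate satisfies $\kappa^*\ge \Phi$, where $$\Phi=\max_{\text{distinct } i,j,k\in\{1,2,3\}} \left\{ \frac{H(W_j,W_k\mid W_i)}{\log F - \max \{ H(N_0), H(N_i)\} } \right\}.$$ Equivalently, every achievable source-channel rate $\kappa$ satisfies $H(W_j,W_k\mid W_i)\le \kappa\,[\log F-\max\{H(N_0),H(N_i)\}]$ for all distinct $i,j,k$.
   Context: Model. Nodes $0$ (relay) and $1,2,3$ (users). $\mathcal{F}$ is a finite field with $|\mathcal{F}|=F$ (a prime power), with addition $\oplus$. A discrete memoryless source produces i.i.d. triplets $(W_1[u],W_2[u],W_3[u])$, $u=1,\dots,m$, according to a fixed joint pmf $p(w_1,w_2,w_3)$ on finite alphabets; user $i$'s message is $\mathbf{W}_i=(W_i[1],\dots,W_i[m])$; the relay has no message. The channel is used $n$ times: uplink $Y_0=X_1\oplus X_2\oplus X_3\oplus N_0$, downlink $Y_i=X_0\oplus N_i$ for $i=1,2,3$, with all $X_d,Y_d,N_d\in\mathcal{F}$; the noises $N_d$ are independent across nodes and channel uses, each $N_d$ has a fixed distribution over uses, independent of the sources, and $H(N_d)<\log F$. All logarithms/entropies are in bits. A block code of source-channel rate $\kappa=n/m$ consists of encoding functions $X_d[t]=f_{d,t}(\mathbf{W}_d,Y_d[1],\dots,Y_d[t-1])$ for $d\in\{0,1,2,3\}$, $t=1,\dots,n$ (with $\mathbf{W}_0$ empty; feedback allowed), and decoders $(\widehat{\mathbf{W}}_j,\widehat{\mathbf{W}}_k)=h_i(\mathbf{Y}_i,\mathbf{W}_i)$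 at each user $i$, $\{i,j,k\}=\{1,2,3\}$. $P_e$ is the probability that at least one user decodes incorrectly. A rate $\kappa$ is achievable if for every $\zeta>0$ there is a block code of source-channel rate $\kappa$ with $P_e<\zeta$. $\kappa^*$ denotes the infimum of achievable source-channel rates. *)

theory Defs
  imports "HOL-Probability.Probability"
begin

definition entropy :: "'x::finite pmf \<Rightarrow> real" where
  "entropy P = - (\<Sum>x\<in>UNIV. if pmf P x = 0 then 0 else pmf P x * log 2 (pmf P x))"

definition cond_entropy :: "'o pmf \<Rightarrow> ('o \<Rightarrow> 'y::finite) \<Rightarrow> ('o \<Rightarrow> 'x::finite) \<Rightarrow> real" where
  "cond_entropy P Y X =
     - (\<Sum>(x, y)\<in>UNIV.
          let pxy = pmf (map_pmf (\<lambda>\<omega>. (X \<omega>, Y \<omega>)) P) (x, y);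
              px  = pmf (map_pmf X P) x
          in if pxy = 0 then 0 else pxy * log 2 (pxy / px))"

text \<open>Time indices are 0-based: at time t (t = 0..n-1) node d sends
  X_d[t] = enc_d t W_d (Y_d[0..t-1]); the relay has no message.
  User i decodes (W_j, W_k) from (Y_i, W_i).\<close>
record ('f, 'a, 'b, 'c) mwrc_code =
  enc0 :: "nat \<Rightarrow> 'f list \<Rightarrow> 'f"
  enc1 :: "nat \<Rightarrow> 'a list \<Rightarrow> 'f list \<Rightarrow> 'f"
  enc2 :: "nat \<Rightarrow> 'b list \<Rightarrow> 'f list \<Rightarrow> 'f"
  enc3 :: "nat \<Rightarrow> 'c list \<Rightarrow> 'f list \<Rightarrow> 'f"
  dec1 :: "'f list \<Rightarrow> 'a list \<Rightarrow> 'b list \<times> 'c list"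
  dec2 :: "'f list \<Rightarrow> 'b list \<Rightarrow> 'a list \<times> 'c list"
  dec3 :: "'f list \<Rightarrow> 'c list \<Rightarrow> 'a list \<times> 'b list"

text \<open>Received sequences (Y_0, Y_1, Y_2, Y_3) after t channel uses, given messages and
  noise realisation z (z (d, t) = N_d at time t).
  Uplink: Y_0 = X_1 + X_2 + X_3 + N_0;  downlink: Y_i = X_0 + N_i.\<close>
fun mwrc_run ::
  "('f::field, 'a, 'b, 'c, 'z) mwrc_code_scheme \<Rightarrow> 'a list \<Rightarrow> 'b list \<Rightarrow> 'c list \<Rightarrow>
   (nat \<times> nat \<Rightarrow> 'f) \<Rightarrow> nat \<Rightarrow> 'f list \<times> 'f list \<times> 'f list \<times> 'f list" where
  "mwrc_run C w1 w2 w3 z 0 = ([], [], [], [])"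
| "mwrc_run C w1 w2 w3 z (Suc t) =
     (case mwrc_run C w1 w2 w3 z t of (y0, y1, y2, y3) \<Rightarrow>
        let x0 = enc0 C t y0; x1 = enc1 C t w1 y1; x2 = enc2 C t w2 y2; x3 = enc3 C t w3 y3
        in (y0 @ [x1 + x2 + x3 + z (0, t)], y1 @ [x0 + z (1, t)],
            y2 @ [x0 + z (2, t)], y3 @ [x0 + z (3, t)]))"

definition source_block :: "('a \<times> 'b \<times> 'c) pmf \<Rightarrow> nat \<Rightarrow> (nat \<Rightarrow> 'a \<times> 'b \<times> 'c) pmf" where
  "source_block p m = Pi_pmf {..<m} undefined (\<lambda>_. p)"

definition noise_block :: "(nat \<Rightarrow> 'f pmf) \<Rightarrow> nat \<Rightarrow> (nat \<times> nat \<Rightarrow> 'f) pmf" where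
  "noise_block q n = Pi_pmf ({..<4} \<times> {..<n}) undefined (\<lambda>(d, t). q d)"

definition err_prob ::
  "('a \<times> 'b \<times> 'c) pmf \<Rightarrow> (nat \<Rightarrow> 'f::field pmf) \<Rightarrow> ('f, 'a, 'b, 'c) mwrc_code \<Rightarrow> nat \<Rightarrow> nat \<Rightarrow> real" where
  "err_prob p q C m n =
     measure_pmf.prob (pair_pmf (source_block p m) (noise_block q n))
       {(s, z). let w1 = map (\<lambda>u. fst (s u)) [0..<m];
                    w2 = map (\<lambda>u. fst (snd (s u))) [0..<m];
                    w3 = map (\<lambda>u. snd (snd (s u))) [0..<m]
                in case mwrc_run C w1 w2 w3 z n of (y0, y1, y2, y3) \<Rightarrow>
                     dec1 C y1 w1 \<noteq> (w2, w3) \<or> dec2 C y2 w2 \<noteq> (w1, w3) \<or> dec3 C y3 w3 \<noteq> (w1, w2)}"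

definition achievable :: "('a \<times> 'b \<times> 'c) pmf \<Rightarrow> (nat \<Rightarrow> 'f::field pmf) \<Rightarrow> real \<Rightarrow> bool" where
  "achievable p q \<kappa> \<longleftrightarrow>
     (\<forall>\<zeta>>0. \<exists>m n (C :: ('f, 'a, 'b, 'c) mwrc_code).
        m > 0 \<and> real n / real m = \<kappa> \<and> err_prob p q C m n < \<zeta>)"

text \<open>kappa* = infimum of achievable rates (in the extended reals, so Inf {} = \<infinity>).\<close>
definition kappa_star :: "('a \<times> 'b \<times> 'c) pmf \<Rightarrow> (nat \<Rightarrow> 'f::field pmf) \<Rightarrow> ereal" where
  "kappa_star p q = Inf (ereal ` {\<kappa>. achievable p q \<kappa>})"

end

theory Submission
  imports Defs
begin


definition Hd :: "'x pmf \<Rightarrow> real" where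
  "Hd D = - (\<Sum>x\<in>set_pmf D. pmf D x * log 2 (pmf D x))"

definition Hv :: "'o pmf \<Rightarrow> ('o \<Rightarrow> 'x) \<Rightarrow> real" where
  "Hv P X = Hd (map_pmf X P)"

lemma pmf_map_sum:
  assumes "finite (set_pmf P)"
  shows "pmf (map_pmf X P) x = (\<Sum>\<omega>\<in>{\<omega>\<in>set_pmf P. X \<omega> = x}. pmf P \<omega>)"
proof -
  have "pmf (map_pmf X P) x = measure P (X -` {x} \<inter> set_pmf P)"
    by (simp add: pmf_map measure_Int_set_pmf)
  also have "X -` {x} \<inter> set_pmf P = {\<omega>\<in>set_pmf P. X \<omega> = x}" by auto
  also have "measure P \<dots> = (\<Sum>\<omega>\<in>{\<omega>\<in>set_pmf P. X \<omega> = x}. pmf P \<omega>)"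
    using assms by (intro measure_measure_pmf_finite) auto
  finally show ?thesis .
qed

lemma expect_map:
  assumes "finite (set_pmf P)" "finite A" "X ` set_pmf P \<subseteq> A"
  shows "(\<Sum>x\<in>A. pmf (map_pmf X P) x * h x) = (\<Sum>\<omega>\<in>set_pmf P. pmf P \<omega> * h (X \<omega>))"
proof -
  have "(\<Sum>x\<in>A. pmf (map_pmf X P) x * h x) = (\<Sum>x\<in>A. \<Sum>\<omega>\<in>{\<omega>\<in>set_pmf P. X \<omega> = x}. pmf P \<omega> * h (X \<omega>))"
    by (intro sum.cong refl) (simp add: pmf_map_sum[OF assms(1)] sum_distrib_right)
  also have "\<dots> = (\<Sum>\<omega>\<in>set_pmf P. pmf P \<omega> * h (X \<omega>))"
    by (rule sum.group[OF assms(1,2,3)])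
  finally show ?thesis .
qed

lemma pX_pos: "\<omega> \<in> set_pmf P \<Longrightarrow> pmf (map_pmf X P) (X \<omega>) > 0"
  by (intro pmf_positive) auto

lemma Hv_exp:
  assumes "finite (set_pmf P)"
  shows "Hv P X = - (\<Sum>\<omega>\<in>set_pmf P. pmf P \<omega> * log 2 (pmf (map_pmf X P) (X \<omega>)))"
  unfolding Hv_def Hd_def
  by (subst expect_map[OF assms]) (auto intro: finite_imageI assms)

lemma Hv_mono:
  assumes "finite (set_pmf P)"
    and "\<And>\<omega> \<omega>'. \<omega> \<in> set_pmf P \<Longrightarrow> \<omega>' \<in> set_pmf P \<Longrightarrow> X \<omega> = X \<omega>' \<Longrightarrow> Y \<omega> = Y \<omega>'"
  shows "Hv P Y \<le> Hv P X"
proof -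
  have "pmf P \<omega> * log 2 (pmf (map_pmf X P) (X \<omega>)) \<le> pmf P \<omega> * log 2 (pmf (map_pmf Y P) (Y \<omega>))"
    if w: "\<omega> \<in> set_pmf P" for \<omega>
  proof -
    have "pmf (map_pmf X P) (X \<omega>) \<le> pmf (map_pmf Y P) (Y \<omega>)"
      unfolding pmf_map_sum[OF assms(1)]
      using assms(2)[OF _ w] assms(1)
      by (intro sum_mono2) auto
    then show ?thesis using pX_pos[OF w, of X] pmf_nonneg[of P \<omega>]
      by (intro mult_left_mono) auto
  qed
  then show ?thesis unfolding Hv_exp[OF assms(1)] by (simp add: sum_mono)
qed

lemma Hv_cong:
  assumes "finite (set_pmf P)"
    and "\<And>\<omega> \<omega>'. \<omega> \<in> set_pmf P \<Longrightarrow> \<omega>' \<in> set_pmf P \<Longrightarrow> X \<omega> = X \<omega>' \<longleftrightarrow> Y \<omega> = Y \<omega>'"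
  shows "Hv P Y = Hv P X"
  using Hv_mono[OF assms(1), of X Y] Hv_mono[OF assms(1), of Y X] assms(2) by fastforce

lemma sum_pmf_set: "finite (set_pmf P) \<Longrightarrow> (\<Sum>\<omega>\<in>set_pmf P. pmf P \<omega>) = 1"
  by (rule sum_pmf_eq_1) auto

lemma log_ineq_term:
  fixes a b c d w :: real
  assumes "a > 0" "b > 0" "c > 0" "d > 0" "w \<ge> 0"
  shows "w * (log 2 b + log 2 c - log 2 a - log 2 d) \<le> w * (b * c / (a * d) - 1) / ln 2"
proof -
  have "log 2 b + log 2 c - log 2 a - log 2 d = ln (b * c / (a * d)) / ln 2"
    using assms by (simp add: log_def ln_mult ln_div diff_divide_distrib add_divide_distrib)
  also have "\<dots> \<le> (b * c / (a * d) - 1) / ln 2"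
    using assms by (intro divide_right_mono ln_le_minus_one) auto
  finally show ?thesis using mult_left_mono[OF _ assms(5)] by fastforce
qed

lemma marginal_sum:
  assumes "finite (set_pmf P)"
  shows "(\<Sum>z\<in>Z ` set_pmf P. pmf (map_pmf (\<lambda>\<omega>. (Y \<omega>, Z \<omega>)) P) (y, z)) = pmf (map_pmf Y P) y"
proof -
  have "(\<Sum>z\<in>Z ` set_pmf P. pmf (map_pmf (\<lambda>\<omega>. (Y \<omega>, Z \<omega>)) P) (y, z))
      = (\<Sum>z\<in>Z ` set_pmf P. \<Sum>\<omega>\<in>{\<omega>\<in>{\<omega>\<in>set_pmf P. Y \<omega> = y}. Z \<omega> = z}. pmf P \<omega>)"
  proof -
    have "\<And>z. {\<omega>\<in>set_pmf P. (Y \<omega>, Z \<omega>) = (y, z)} = {\<omega>\<in>{\<omega>\<in>set_pmf P. Y \<omega> = y}. Z \<omega> = z}"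
      by auto
    then show ?thesis unfolding pmf_map_sum[OF assms] by simp
  qed
  also have "\<dots> = (\<Sum>\<omega>\<in>{\<omega>\<in>set_pmf P. Y \<omega> = y}. pmf P \<omega>)"
    using assms by (intro sum.group) auto
  finally show ?thesis unfolding pmf_map_sum[OF assms] .
qed

lemma Hv_submod:
  assumes fin: "finite (set_pmf P)"
  shows "Hv P (\<lambda>\<omega>. ((X \<omega>, Y \<omega>), Z \<omega>)) + Hv P Y
         \<le> Hv P (\<lambda>\<omega>. (X \<omega>, Y \<omega>)) + Hv P (\<lambda>\<omega>. (Y \<omega>, Z \<omega>))"
proof -
  define S where "S = set_pmf P"
  define pa where "pa = pmf (map_pmf (\<lambda>\<omega>. ((X \<omega>, Y \<omega>), Z \<omega>)) P)"
  define pb where "pb = pmf (map_pmf (\<lambda>\<omega>. (X \<omega>, Y \<omega>)) P)"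
  define pc where "pc = pmf (map_pmf (\<lambda>\<omega>. (Y \<omega>, Z \<omega>)) P)"
  define pd where "pd = pmf (map_pmf Y P)"
  define g where "g = (\<lambda>t. case t of ((x, y), z) \<Rightarrow> pb (x, y) * pc (y, z) / pd y)"
  have finS: "finite S" using fin S_def by simp
  have A_pos: "pa ((X \<omega>, Y \<omega>), Z \<omega>) > 0" "pb (X \<omega>, Y \<omega>) > 0" "pc (Y \<omega>, Z \<omega>) > 0" "pd (Y \<omega>) > 0"
    if "\<omega> \<in> S" for \<omega>
    using pX_pos[of \<omega> P] that unfolding S_def pa_def pb_def pc_def pd_def
    by (auto intro: pmf_positive)
  have key: "(\<Sum>\<omega>\<in>S. pmf P \<omega> * (pb (X \<omega>, Y \<omega>) * pc (Y \<omega>, Z \<omega>) / (pa ((X \<omega>, Y \<omega>), Z \<omega>) * pd (Y \<omega>)))) \<le> 1"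
  proof -
    define T where "T = (\<lambda>\<omega>. ((X \<omega>, Y \<omega>), Z \<omega>)) ` S"
    define AA where "AA = (\<lambda>\<omega>. (X \<omega>, Y \<omega>)) ` S"
    define ZZ where "ZZ = Z ` S"
    have "(\<Sum>\<omega>\<in>S. pmf P \<omega> * (pb (X \<omega>, Y \<omega>) * pc (Y \<omega>, Z \<omega>) / (pa ((X \<omega>, Y \<omega>), Z \<omega>) * pd (Y \<omega>))))
        = (\<Sum>t\<in>T. pa t * (g t / pa t))"
      unfolding pa_def T_def S_def
      by (subst expect_map[OF fin]) (auto simp: fin g_def pa_def ac_simps)
    also have "\<dots> = (\<Sum>t\<in>T. g t)"
    proof (intro sum.cong refl)
      fix t assume "t \<in> T"
      then obtain \<omega> where "\<omega> \<in> S" "t = ((X \<omega>, Y \<omega>), Z \<omega>)" by (auto simp: T_def)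
      then show "pa t * (g t / pa t) = g t" using A_pos(1)[of \<omega>] by simp
    qed
    also have "\<dots> \<le> (\<Sum>t\<in>AA \<times> ZZ. g t)"
    proof (rule sum_mono2)
      show "finite (AA \<times> ZZ)" using finS by (auto simp: AA_def ZZ_def)
      show "T \<subseteq> AA \<times> ZZ" by (auto simp: T_def AA_def ZZ_def)
      show "0 \<le> g t" for t unfolding g_def pb_def pc_def pd_def
        by (auto split: prod.splits)
    qed
    also have "\<dots> = (\<Sum>(x,y)\<in>AA. pb (x, y) / pd y * (\<Sum>z\<in>ZZ. pc (y, z)))"
    proof -
      have "(\<Sum>t\<in>AA \<times> ZZ. g t) = (\<Sum>xy\<in>AA. \<Sum>z\<in>ZZ. g (xy, z))"
        using sum.cartesian_product[of "\<lambda>xy z. g (xy, z)" ZZ AA] by (simp add: case_prod_unfold)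
      then show ?thesis by (simp add: g_def sum_distrib_left case_prod_unfold)
    qed
    also have "\<dots> = (\<Sum>(x,y)\<in>AA. pb (x, y))"
    proof (intro sum.cong refl)
      fix xy assume "xy \<in> AA"
      then obtain \<omega> where w: "\<omega> \<in> S" "xy = (X \<omega>, Y \<omega>)" by (auto simp: AA_def)
      have "(\<Sum>z\<in>ZZ. pc (Y \<omega>, z)) = pd (Y \<omega>)"
        unfolding ZZ_def pc_def pd_def S_def by (rule marginal_sum[OF fin])
      then show "(case xy of (x, y) \<Rightarrow> pb (x, y) / pd y * (\<Sum>z\<in>ZZ. pc (y, z))) = (case xy of (x, y) \<Rightarrow> pb (x, y))"
        using w A_pos(4)[OF w(1)] by simp
    qed
    also have "\<dots> = 1"
      unfolding pb_def AA_def S_def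
      by (simp add: case_prod_unfold, rule sum_pmf_eq_1) (auto simp: fin)
    finally show ?thesis .
  qed
  have "Hv P (\<lambda>\<omega>. ((X \<omega>, Y \<omega>), Z \<omega>)) + Hv P Y - Hv P (\<lambda>\<omega>. (X \<omega>, Y \<omega>)) - Hv P (\<lambda>\<omega>. (Y \<omega>, Z \<omega>))
      = (\<Sum>\<omega>\<in>S. pmf P \<omega> * (log 2 (pb (X \<omega>, Y \<omega>)) + log 2 (pc (Y \<omega>, Z \<omega>)) - log 2 (pa ((X \<omega>, Y \<omega>), Z \<omega>)) - log 2 (pd (Y \<omega>))))"
    unfolding Hv_exp[OF fin] S_def pa_def pb_def pc_def pd_def
    by (simp add: sum_subtractf sum.distrib algebra_simps sum_negf)
  also have "\<dots> \<le> (\<Sum>\<omega>\<in>S. pmf P \<omega> * (pb (X \<omega>, Y \<omega>) * pc (Y \<omega>, Z \<omega>) / (pa ((X \<omega>, Y \<omega>), Z \<omega>) * pd (Y \<omega>)) - 1) / ln 2)"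
    by (intro sum_mono log_ineq_term) (use A_pos in auto)
  also have "\<dots> = ((\<Sum>\<omega>\<in>S. pmf P \<omega> * (pb (X \<omega>, Y \<omega>) * pc (Y \<omega>, Z \<omega>) / (pa ((X \<omega>, Y \<omega>), Z \<omega>) * pd (Y \<omega>)))) - (\<Sum>\<omega>\<in>S. pmf P \<omega>)) / ln 2"
    by (simp add: sum_divide_distrib[symmetric] sum_subtractf right_diff_distrib)
  also have "\<dots> \<le> 0"
    using key sum_pmf_set[OF fin] unfolding S_def by (simp add: divide_nonpos_pos)
  finally show ?thesis by simp
qed

lemma Hd_return: "Hd (return_pmf c) = 0"
  by (simp add: Hd_def)

lemma Hv_const: "Hv P (\<lambda>_. c) = 0"
  by (simp add: Hv_def map_pmf_const Hd_return)

lemma Hd_nonneg: "finite (set_pmf D) \<Longrightarrow> Hd D \<ge> 0"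
  unfolding Hd_def
proof -
  have "pmf D x * log 2 (pmf D x) \<le> 0" if x: "x \<in> set_pmf D" for x
  proof -
    have "log 2 (pmf D x) \<le> log 2 1" using pmf_le_1[of D x] pmf_positive[OF x] by (subst log_le_cancel_iff) auto
    then show ?thesis by (simp add: mult_nonneg_nonpos)
  qed
  then show "- (\<Sum>x\<in>set_pmf D. pmf D x * log 2 (pmf D x)) \<ge> 0" by (simp add: sum_nonpos)
qed

lemma Hv_nonneg: "finite (set_pmf P) \<Longrightarrow> Hv P X \<ge> 0"
  unfolding Hv_def by (rule Hd_nonneg) simp

lemma Hv_subadd:
  assumes fin: "finite (set_pmf P)"
  shows "Hv P (\<lambda>\<omega>. (X \<omega>, Z \<omega>)) \<le> Hv P X + Hv P Z"
proof -
  have "Hv P (\<lambda>\<omega>. ((X \<omega>, ()), Z \<omega>)) + Hv P (\<lambda>_. ())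
         \<le> Hv P (\<lambda>\<omega>. (X \<omega>, ())) + Hv P (\<lambda>\<omega>. ((), Z \<omega>))"
    by (rule Hv_submod[OF fin])
  moreover have "Hv P (\<lambda>\<omega>. ((X \<omega>, ()), Z \<omega>)) = Hv P (\<lambda>\<omega>. (X \<omega>, Z \<omega>))"
    by (rule Hv_cong[OF fin]) auto
  moreover have "Hv P (\<lambda>\<omega>. (X \<omega>, ())) = Hv P X"
    by (rule Hv_cong[OF fin]) auto
  moreover have "Hv P (\<lambda>\<omega>. ((), Z \<omega>)) = Hv P Z"
    by (rule Hv_cong[OF fin]) auto
  ultimately show ?thesis by (simp add: Hv_const)
qed

lemma Hv_card:
  assumes fin: "finite (set_pmf P)" and B: "finite B" "X ` set_pmf P \<subseteq> B"
  shows "Hv P X \<le> log 2 (card B)"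
proof -
  define S where "S = set_pmf P"
  define px where "px = pmf (map_pmf X P)"
  have pos: "px (X \<omega>) > 0" if "\<omega> \<in> S" for \<omega> using pX_pos[of \<omega> P X] that by (simp add: S_def px_def)
  have Sne: "S \<noteq> {}" unfolding S_def by (rule set_pmf_not_empty)
  then have "X ` S \<noteq> {}" by auto
  then have cardpos: "card B > 0" using B S_def by (metis card_gt_0_iff finite_subset image_is_empty subset_empty)
  define N where "N = real (card B)"
  have Npos: "N > 0" using cardpos N_def by simp
  have "Hv P X - log 2 N = (\<Sum>\<omega>\<in>S. pmf P \<omega> * (- log 2 (px (X \<omega>)) - log 2 N))"
    unfolding Hv_exp[OF fin] S_def px_def
    using sum_pmf_set[OF fin] by (simp add: algebra_simps sum_subtractf sum_distrib_right[symmetric] sum_negf)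
  also have "\<dots> \<le> (\<Sum>\<omega>\<in>S. pmf P \<omega> * ((1 / (N * px (X \<omega>)) - 1) / ln 2))"
  proof (intro sum_mono mult_left_mono)
    fix \<omega> assume w: "\<omega> \<in> S"
    have "- log 2 (px (X \<omega>)) - log 2 N = ln (1 / (N * px (X \<omega>))) / ln 2"
      using pos[OF w] Npos by (simp add: log_def ln_div ln_mult diff_divide_distrib) 
    also have "\<dots> \<le> (1 / (N * px (X \<omega>)) - 1) / ln 2"
      using pos[OF w] Npos by (intro divide_right_mono ln_le_minus_one) auto
    finally show "- log 2 (px (X \<omega>)) - log 2 N \<le> (1 / (N * px (X \<omega>)) - 1) / ln 2" .
  qed simp
  also have "\<dots> = ((\<Sum>\<omega>\<in>S. pmf P \<omega> * (1 / (N * px (X \<omega>)))) - 1) / ln 2"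
    using sum_pmf_set[OF fin] unfolding S_def
    by (simp add: sum_divide_distrib[symmetric] sum_subtractf right_diff_distrib)
  also have "\<dots> \<le> 0"
  proof -
    have "(\<Sum>\<omega>\<in>S. pmf P \<omega> * (1 / (N * px (X \<omega>)))) = (\<Sum>x\<in>X ` S. px x * (1 / (N * px x)))"
      unfolding S_def px_def by (subst expect_map[OF fin]) (auto simp: fin)
    also have "\<dots> = (\<Sum>x\<in>X ` S. 1 / N)"
    proof (intro sum.cong refl)
      fix x assume "x \<in> X ` S"
      then obtain \<omega> where "\<omega> \<in> S" "x = X \<omega>" by auto
      then show "px x * (1 / (N * px x)) = 1 / N" using pos[of \<omega>] Npos by simp
    qed
    also have "\<dots> = card (X ` S) / N" by simp
    also have "\<dots> \<le> 1" using B Npos unfolding N_def S_def by (simp add: card_mono)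
    finally show ?thesis by (simp add: divide_nonpos_pos)
  qed
  finally have "Hv P X - log 2 N \<le> 0" .
  then show ?thesis by (simp add: N_def)
qed

lemma Hd_pair:
  assumes "finite (set_pmf A)" "finite (set_pmf B)"
  shows "Hd (pair_pmf A B) = Hd A + Hd B"
proof -
  have "Hd (pair_pmf A B) = - (\<Sum>a\<in>set_pmf A. \<Sum>b\<in>set_pmf B. pmf A a * pmf B b * (log 2 (pmf A a) + log 2 (pmf B b)))"
  proof -
    have "(\<Sum>x\<in>set_pmf A \<times> set_pmf B. pmf (pair_pmf A B) x * log 2 (pmf (pair_pmf A B) x))
      = (\<Sum>(a,b)\<in>set_pmf A \<times> set_pmf B. pmf A a * pmf B b * (log 2 (pmf A a) + log 2 (pmf B b)))"
      by (intro sum.cong refl) (auto simp: pmf_pair log_mult pmf_positive)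
    then show ?thesis unfolding Hd_def set_pair_pmf by (simp add: sum.cartesian_product)
  qed
  also have "\<dots> = - ((\<Sum>a\<in>set_pmf A. pmf A a * log 2 (pmf A a)) * (\<Sum>b\<in>set_pmf B. pmf B b)
                 + (\<Sum>a\<in>set_pmf A. pmf A a) * (\<Sum>b\<in>set_pmf B. pmf B b * log 2 (pmf B b)))"
    apply (simp add: algebra_simps sum.distrib sum_distrib_left sum_distrib_right)
    by (rule sum.swap)
  also have "\<dots> = Hd A + Hd B"
    using sum_pmf_set[OF assms(1)] sum_pmf_set[OF assms(2)] by (simp add: Hd_def)
  finally show ?thesis .
qed

lemma Hv_indep:
  assumes fin: "finite (set_pmf P)"
    and eq: "map_pmf (\<lambda>\<omega>. (X \<omega>, Y \<omega>)) P = pair_pmf (map_pmf X P) (map_pmf Y P)"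
  shows "Hv P (\<lambda>\<omega>. (X \<omega>, Y \<omega>)) = Hv P X + Hv P Y"
  unfolding Hv_def eq using fin by (intro Hd_pair) auto

lemma Hv_map_base: "Hv (map_pmf g P) X = Hv P (\<lambda>\<omega>. X (g \<omega>))"
  by (simp add: Hv_def pmf.map_comp o_def)

lemma Hd_inj:
  assumes "inj_on h (set_pmf D)"
  shows "Hd (map_pmf h D) = Hd D"
  unfolding Hd_def set_map_pmf
  using assms by (simp add: sum.reindex pmf_map_inj)

lemma finite_set_Pi_pmf:
  assumes "finite I" "\<And>i. i \<in> I \<Longrightarrow> finite (set_pmf (Q i))"
  shows "finite (set_pmf (Pi_pmf I dflt Q))"
  using assms by (subst set_Pi_pmf) (auto intro!: finite_PiE_dflt)

lemma Hd_iid: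
  assumes "finite I" "inj_on \<iota> {..<n}" "\<iota> ` {..<n} \<subseteq> I" "\<forall>t<n. Q (\<iota> t) = D"
    "\<forall>i\<in>I. finite (set_pmf (Q i))"
  shows "Hd (map_pmf (\<lambda>g. map (\<lambda>t. f (g (\<iota> t))) [0..<n]) (Pi_pmf I dflt Q)) = real n * Hd (map_pmf f D)"
  using assms
proof (induction n arbitrary: I)
  case 0
  then show ?case by (simp add: map_pmf_const Hd_return)
next
  case (Suc n)
  define x where "x = \<iota> n"
  define A where "A = I - {x}"
  have xI: "x \<in> I" using Suc.prems(3) by (auto simp: x_def)
  have IA: "I = insert x A" "x \<notin> A" "finite A" using xI Suc.prems(1) by (auto simp: A_def)
  have ne: "\<iota> t \<noteq> x" if "t < n" for t
    using Suc.prems(2) that by (auto simp: x_def inj_on_def)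
  have sub: "\<iota> ` {..<n} \<subseteq> A" using Suc.prems(3) ne by (auto simp: A_def)
  have inj: "inj_on \<iota> {..<n}" using Suc.prems(2) by (rule inj_on_subset) auto
  define L where "L = (\<lambda>g. map (\<lambda>t. f (g (\<iota> t))) [0..<n])"
  have finA: "finite (set_pmf (Pi_pmf A dflt Q))"
    using IA Suc.prems(5) by (intro finite_set_Pi_pmf) (auto simp: A_def)
  have finD: "finite (set_pmf D)" using Suc.prems(4,5) xI by (auto simp: x_def)
  have "map_pmf (\<lambda>g. map (\<lambda>t. f (g (\<iota> t))) [0..<Suc n]) (Pi_pmf I dflt Q)
      = map_pmf (\<lambda>(y, g). L g @ [f y]) (pair_pmf (Q x) (Pi_pmf A dflt Q))"
    unfolding IA(1) Pi_pmf_insert[OF IA(3,2)] pmf.map_comp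
    by (intro map_pmf_cong refl) (auto simp: L_def x_def[symmetric] ne)
  also have "\<dots> = map_pmf (\<lambda>(a, b). b @ [a]) (pair_pmf (map_pmf f (Q x)) (map_pmf L (Pi_pmf A dflt Q)))"
    by (simp add: map_pair[symmetric] pmf.map_comp o_def case_prod_unfold)
  finally have eq: "map_pmf (\<lambda>g. map (\<lambda>t. f (g (\<iota> t))) [0..<Suc n]) (Pi_pmf I dflt Q) = \<dots>" .
  have "Q x = D" using Suc.prems(4) by (simp add: x_def)
  have "Hd (map_pmf L (Pi_pmf A dflt Q)) = real n * Hd (map_pmf f D)"
    unfolding L_def using IA(3) inj sub Suc.prems(4,5)
    by (intro Suc.IH) (auto simp: A_def)
  then show ?case unfolding eq
    using finD finA \<open>Q x = D\<close>
    by (subst Hd_inj) (auto simp: Hd_pair algebra_simps inj_on_def)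
qed

lemma bad_bound:
  fixes w pd :: "'o \<Rightarrow> real"
  assumes fin: "finite Sb" and pos: "\<And>\<omega>. \<omega> \<in> Sb \<Longrightarrow> w \<omega> > 0 \<and> pd \<omega> > 0"
    and e: "e = (\<Sum>\<omega>\<in>Sb. w \<omega>)" and N: "N > 0" and sumN: "(\<Sum>\<omega>\<in>Sb. w \<omega> / pd \<omega>) \<le> N"
  shows "- (\<Sum>\<omega>\<in>Sb. w \<omega> * log 2 (pd \<omega>)) \<le> e * log 2 N - e * log 2 e"
proof (cases "Sb = {}")
  case True then show ?thesis using e by simp
next
  case False
  then have epos: "e > 0" using e fin pos by (metis sum_pos)
  have "- (\<Sum>\<omega>\<in>Sb. w \<omega> * log 2 (pd \<omega>)) - e * log 2 N + e * log 2 e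
       = (\<Sum>\<omega>\<in>Sb. w \<omega> * (log 2 e - log 2 N - log 2 (pd \<omega>)))"
    unfolding e by (simp add: algebra_simps sum.distrib sum_subtractf sum_distrib_right sum_negf)
  also have "\<dots> \<le> (\<Sum>\<omega>\<in>Sb. w \<omega> * ((e / (N * pd \<omega>) - 1) / ln 2))"
  proof (intro sum_mono mult_left_mono)
    fix \<omega> assume w: "\<omega> \<in> Sb"
    have "log 2 e - log 2 N - log 2 (pd \<omega>) = ln (e / (N * pd \<omega>)) / ln 2"
      using pos[OF w] N epos by (simp add: log_def ln_div ln_mult diff_divide_distrib add_divide_distrib)
    also have "\<dots> \<le> (e / (N * pd \<omega>) - 1) / ln 2"
      using pos[OF w] N epos by (intro divide_right_mono ln_le_minus_one) auto
    finally show "log 2 e - log 2 N - log 2 (pd \<omega>) \<le> (e / (N * pd \<omega>) - 1) / ln 2" .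
    show "0 \<le> w \<omega>" using pos[OF w] by simp
  qed
  also have "\<dots> = (e / N * (\<Sum>\<omega>\<in>Sb. w \<omega> / pd \<omega>) - e) / ln 2"
  proof -
    have "(\<Sum>\<omega>\<in>Sb. w \<omega> * ((e / (N * pd \<omega>) - 1) / ln 2)) = (\<Sum>\<omega>\<in>Sb. (e / N * (w \<omega> / pd \<omega>) - w \<omega>) / ln 2)"
      by (intro sum.cong refl) (use pos N in \<open>auto simp: field_simps\<close>)
    also have "\<dots> = (e / N * (\<Sum>\<omega>\<in>Sb. w \<omega> / pd \<omega>) - e) / ln 2"
      unfolding sum_divide_distrib[symmetric] sum_subtractf sum_distrib_left[symmetric] e[symmetric] ..
    finally show ?thesis .
  qed
  also have "\<dots> \<le> 0"
  proof -
    have "e / N * (\<Sum>\<omega>\<in>Sb. w \<omega> / pd \<omega>) \<le> e / N * N"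
      using sumN epos N by (intro mult_left_mono) auto
    then show ?thesis using N by (simp add: divide_nonpos_pos)
  qed
  finally show ?thesis by simp
qed

lemma fano:
  assumes fin: "finite (set_pmf P)" and B: "finite B" "T ` set_pmf P \<subseteq> B"
    and e: "e = (\<Sum>\<omega>\<in>{\<omega>\<in>set_pmf P. g (V \<omega>) \<noteq> T \<omega>}. pmf P \<omega>)"
  shows "Hv P (\<lambda>\<omega>. (V \<omega>, T \<omega>)) - Hv P V \<le> - (1 - e) * log 2 (1 - e) - e * log 2 e + e * log 2 (card B)"
proof -
  define S where "S = set_pmf P"
  define D where "D = (\<lambda>\<omega>. if g (V \<omega>) = T \<omega> then None else Some (T \<omega>))"
  define Sg where "Sg = {\<omega>\<in>S. g (V \<omega>) = T \<omega>}"
  define Sb where "Sb = {\<omega>\<in>S. g (V \<omega>) \<noteq> T \<omega>}"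
  define pD where "pD = pmf (map_pmf D P)"
  have finS: "finite S" using fin S_def by simp
  have "Hv P (\<lambda>\<omega>. (V \<omega>, T \<omega>)) = Hv P (\<lambda>\<omega>. (V \<omega>, D \<omega>))"
    by (rule Hv_cong[OF fin]) (auto simp: D_def split: if_splits)
  also have "\<dots> \<le> Hv P V + Hv P D" by (rule Hv_subadd[OF fin])
  finally have 1: "Hv P (\<lambda>\<omega>. (V \<omega>, T \<omega>)) - Hv P V \<le> Hv P D" by simp
  have SgSb: "S = Sg \<union> Sb" "Sg \<inter> Sb = {}" by (auto simp: Sg_def Sb_def)
  have finSg: "finite Sg" "finite Sb" using finS by (auto simp: Sg_def Sb_def)
  have esum: "(\<Sum>\<omega>\<in>Sg. pmf P \<omega>) = 1 - e"
  proof -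
    have "(\<Sum>\<omega>\<in>S. pmf P \<omega>) = (\<Sum>\<omega>\<in>Sg. pmf P \<omega>) + (\<Sum>\<omega>\<in>Sb. pmf P \<omega>)"
      using SgSb finSg by (simp add: sum.union_disjoint)
    then show ?thesis using sum_pmf_set[OF fin] e by (simp add: S_def Sb_def)
  qed
  have pDg: "pD (D \<omega>) = 1 - e" if "\<omega> \<in> Sg" for \<omega>
  proof -
    have "D \<omega> = None" using that by (simp add: D_def Sg_def)
    moreover have "{\<omega>'\<in>set_pmf P. D \<omega>' = None} = Sg" by (auto simp: D_def Sg_def S_def split: if_splits)
    ultimately show ?thesis unfolding pD_def pmf_map_sum[OF fin] using esum by simp
  qed
  have pDpos: "pD (D \<omega>) > 0" if "\<omega> \<in> S" for \<omega> using pX_pos[of \<omega> P D] that by (simp add: S_def pD_def)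
  have HD: "Hv P D = - (\<Sum>\<omega>\<in>Sg. pmf P \<omega> * log 2 (pD (D \<omega>))) - (\<Sum>\<omega>\<in>Sb. pmf P \<omega> * log 2 (pD (D \<omega>)))"
    unfolding Hv_exp[OF fin] pD_def[symmetric] S_def[symmetric] SgSb(1)
    using SgSb finSg by (simp add: sum.union_disjoint)
  have HG: "(\<Sum>\<omega>\<in>Sg. pmf P \<omega> * log 2 (pD (D \<omega>))) = (1 - e) * log 2 (1 - e)"
    using pDg esum by (simp add: sum_distrib_right[symmetric])
  have HB: "- (\<Sum>\<omega>\<in>Sb. pmf P \<omega> * log 2 (pD (D \<omega>))) \<le> e * log 2 (card B) - e * log 2 e"
  proof (cases "Sb = {}")
    case True
    have "e = sum (pmf P) Sb" using e by (simp add: Sb_def S_def)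
    then show ?thesis using True by simp
  next
    case False
    have Bpos: "card B > 0"
    proof -
      obtain \<omega> where "\<omega> \<in> Sb" using False by auto
      then have "T \<omega> \<in> B" using B(2) by (auto simp: Sb_def S_def)
      then show ?thesis using B(1) card_gt_0_iff by blast
    qed
    show ?thesis
    proof (rule bad_bound[OF finSg(2)])
      show "\<And>\<omega>. \<omega> \<in> Sb \<Longrightarrow> 0 < pmf P \<omega> \<and> 0 < pD (D \<omega>)"
        using pDpos by (auto simp: Sb_def S_def pmf_positive)
      show "e = sum (pmf P) Sb" using e by (simp add: Sb_def S_def)
      show "0 < real (card B)" using Bpos by simp
      have "(\<Sum>\<omega>\<in>Sb. pmf P \<omega> / pD (D \<omega>)) = (\<Sum>y\<in>D ` Sb. \<Sum>\<omega>\<in>{\<omega>\<in>Sb. D \<omega> = y}. pmf P \<omega> / pD y)"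
        using finSg by (subst sum.group[symmetric, of Sb "D ` Sb" D]) auto
      also have "\<dots> = (\<Sum>y\<in>D ` Sb. 1)"
      proof (intro sum.cong refl)
        fix y assume "y \<in> D ` Sb"
        then obtain \<omega> where w: "\<omega> \<in> Sb" "y = D \<omega>" by auto
        have set_eq: "{\<omega>'\<in>set_pmf P. D \<omega>' = y} = {\<omega>'\<in>Sb. D \<omega>' = y}"
          using w by (auto simp: D_def Sb_def S_def split: if_splits)
        have "pD y > 0" using w pDpos by (auto simp: Sb_def)
        then show "(\<Sum>\<omega>\<in>{\<omega>\<in>Sb. D \<omega> = y}. pmf P \<omega> / pD y) = 1"
          using set_eq unfolding pD_def pmf_map_sum[OF fin]
          by (simp add: sum_divide_distrib[symmetric])
      qed
      also have "\<dots> = card (D ` Sb)" by simp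
      also have "\<dots> \<le> card (Some ` B)"
        unfolding of_nat_le_iff using B by (intro card_mono) (auto simp: D_def Sb_def S_def)
      also have "\<dots> = card B" by (simp add: card_image)
      finally show "(\<Sum>\<omega>\<in>Sb. pmf P \<omega> / pD (D \<omega>)) \<le> real (card B)" by simp
    qed
  qed
  show ?thesis using 1 HD HG HB by linarith
qed

lemma entropy_Hd: "entropy (P :: 'x::finite pmf) = Hd P"
proof -
  have "(\<Sum>x\<in>UNIV. if pmf P x = 0 then 0 else pmf P x * log 2 (pmf P x))
      = (\<Sum>x\<in>UNIV. pmf P x * log 2 (pmf P x))" by (intro sum.cong) auto
  also have "\<dots> = (\<Sum>x\<in>set_pmf P. pmf P x * log 2 (pmf P x))"
    by (intro sum.mono_neutral_right) (auto simp: set_pmf_iff)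
  finally show ?thesis unfolding entropy_def Hd_def by simp
qed

lemma cond_entropy_Hv:
  fixes P :: "'o pmf" and X :: "'o \<Rightarrow> 'x::finite" and Y :: "'o \<Rightarrow> 'y::finite"
  assumes fin: "finite (set_pmf P)"
  shows "cond_entropy P Y X = Hv P (\<lambda>\<omega>. (X \<omega>, Y \<omega>)) - Hv P X"
proof -
  define pxy where "pxy = pmf (map_pmf (\<lambda>\<omega>. (X \<omega>, Y \<omega>)) P)"
  define px where "px = pmf (map_pmf X P)"
  have trm: "(if pxy (x, y) = 0 then 0 else pxy (x, y) * log 2 (pxy (x, y) / px x))
      = pxy (x, y) * log 2 (pxy (x, y)) - pxy (x, y) * log 2 (px (fst (x, y)))" for x y
  proof (cases "pxy (x, y) = 0")
    case False
    then have "(x, y) \<in> set_pmf (map_pmf (\<lambda>\<omega>. (X \<omega>, Y \<omega>)) P)" unfolding pxy_def set_pmf_iff .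
    then obtain \<omega> where "\<omega> \<in> set_pmf P" "X \<omega> = x" by auto
    then have "px x > 0" using pX_pos[of \<omega> P X] by (simp add: px_def)
    moreover have "pxy (x, y) > 0" using False pmf_nonneg unfolding pxy_def by (metis less_le)
    ultimately show ?thesis using False by (simp add: log_divide right_diff_distrib)
  qed simp
  have "cond_entropy P Y X = - (\<Sum>t\<in>UNIV. pxy t * log 2 (pxy t) - pxy t * log 2 (px (fst t)))"
    unfolding cond_entropy_def Let_def pxy_def[symmetric] px_def[symmetric]
    by (simp add: case_prod_unfold trm[unfolded fst_conv])
  also have "\<dots> = - (\<Sum>t\<in>UNIV. pxy t * log 2 (pxy t)) + (\<Sum>t\<in>UNIV. pxy t * log 2 (px (fst t)))"
    by (simp add: sum_subtractf)
  also have "(\<Sum>t\<in>UNIV. pxy t * log 2 (pxy t)) = - Hv P (\<lambda>\<omega>. (X \<omega>, Y \<omega>))"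
    unfolding Hv_exp[OF fin] pxy_def by (subst expect_map[OF fin]) auto
  also have "(\<Sum>t\<in>UNIV. pxy t * log 2 (px (fst t))) = - Hv P X"
    unfolding Hv_exp[OF fin] pxy_def px_def by (subst expect_map[OF fin]) auto
  finally show ?thesis by simp
qed

lemma cut_lemma:
  assumes fin: "finite (set_pmf P)"
    and h1: "Hv P (\<lambda>\<omega>. (W1 \<omega>, G \<omega>)) = Hv P W1 + Hv P G"
    and h2: "Hv P (\<lambda>\<omega>. ((W1 \<omega>, T \<omega>), G \<omega>)) = Hv P (\<lambda>\<omega>. (W1 \<omega>, T \<omega>)) + Hv P G"
    and h3: "Hv P Ys \<le> c"
    and h4: "\<And>\<omega> \<omega>'. \<omega> \<in> set_pmf P \<Longrightarrow> \<omega>' \<in> set_pmf P \<Longrightarrow> R \<omega> = R \<omega>' \<Longrightarrow> G \<omega> = G \<omega>'"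
    and h5: "\<And>\<omega> \<omega>'. \<omega> \<in> set_pmf P \<Longrightarrow> \<omega>' \<in> set_pmf P \<Longrightarrow> W1 \<omega> = W1 \<omega>' \<Longrightarrow> T \<omega> = T \<omega>'
              \<Longrightarrow> R \<omega> = R \<omega>' \<Longrightarrow> Ys \<omega> = Ys \<omega>' \<longleftrightarrow> N \<omega> = N \<omega>'"
    and h6: "Hv P (\<lambda>\<omega>. (((W1 \<omega>, T \<omega>), R \<omega>), N \<omega>)) = Hv P (\<lambda>\<omega>. ((W1 \<omega>, T \<omega>), R \<omega>)) + Hv P N"
    and h7: "\<And>\<omega> \<omega>'. \<omega> \<in> set_pmf P \<Longrightarrow> \<omega>' \<in> set_pmf P \<Longrightarrow> Ys \<omega> = Ys \<omega>' \<Longrightarrow> G \<omega> = G \<omega>' \<Longrightarrow> Yi \<omega> = Yi \<omega>'"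
  shows "Hv P (\<lambda>\<omega>. (W1 \<omega>, T \<omega>)) - Hv P W1
         \<le> c - Hv P N + (Hv P (\<lambda>\<omega>. ((W1 \<omega>, Yi \<omega>), T \<omega>)) - Hv P (\<lambda>\<omega>. (W1 \<omega>, Yi \<omega>)))"
proof -
  define K where "K = (\<lambda>\<omega>. (Ys \<omega>, G \<omega>))"
  define W where "W = (\<lambda>\<omega>. (W1 \<omega>, T \<omega>))"
  have b: "Hv P (\<lambda>\<omega>. (W1 \<omega>, K \<omega>)) - Hv P W1 \<le> c + Hv P G"
  proof -
    have "Hv P (\<lambda>\<omega>. (W1 \<omega>, K \<omega>)) = Hv P (\<lambda>\<omega>. ((W1 \<omega>, G \<omega>), Ys \<omega>))"
      by (rule Hv_cong[OF fin]) (auto simp: K_def)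
    also have "\<dots> \<le> Hv P (\<lambda>\<omega>. (W1 \<omega>, G \<omega>)) + Hv P Ys" by (rule Hv_subadd[OF fin])
    finally show ?thesis using h1 h3 by simp
  qed
  have c: "Hv P (\<lambda>\<omega>. (W \<omega>, K \<omega>)) - Hv P W \<ge> Hv P G + Hv P N"
  proof -
    have sm: "Hv P (\<lambda>\<omega>. ((Ys \<omega>, (W \<omega>, G \<omega>)), R \<omega>)) + Hv P (\<lambda>\<omega>. (W \<omega>, G \<omega>))
        \<le> Hv P (\<lambda>\<omega>. (Ys \<omega>, (W \<omega>, G \<omega>))) + Hv P (\<lambda>\<omega>. ((W \<omega>, G \<omega>), R \<omega>))"
      by (rule Hv_submod[OF fin])
    have e1: "Hv P (\<lambda>\<omega>. ((Ys \<omega>, (W \<omega>, G \<omega>)), R \<omega>)) = Hv P (\<lambda>\<omega>. ((W \<omega>, R \<omega>), N \<omega>))"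
    proof (rule Hv_cong[OF fin])
      fix \<omega> \<omega>' assume w: "\<omega> \<in> set_pmf P" "\<omega>' \<in> set_pmf P"
      show "((W \<omega>, R \<omega>), N \<omega>) = ((W \<omega>', R \<omega>'), N \<omega>') \<longleftrightarrow>
            ((Ys \<omega>, W \<omega>, G \<omega>), R \<omega>) = ((Ys \<omega>', W \<omega>', G \<omega>'), R \<omega>')"
        using h4[OF w] h5[OF w] by (auto simp: W_def)
    qed
    have e2: "Hv P (\<lambda>\<omega>. ((W \<omega>, G \<omega>), R \<omega>)) = Hv P (\<lambda>\<omega>. (W \<omega>, R \<omega>))"
    proof (rule Hv_cong[OF fin])
      fix \<omega> \<omega>' assume w: "\<omega> \<in> set_pmf P" "\<omega>' \<in> set_pmf P"
      show "(W \<omega>, R \<omega>) = (W \<omega>', R \<omega>') \<longleftrightarrow> ((W \<omega>, G \<omega>), R \<omega>) = ((W \<omega>', G \<omega>'), R \<omega>')"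
        using h4[OF w] by auto
    qed
    have e3: "Hv P (\<lambda>\<omega>. (Ys \<omega>, (W \<omega>, G \<omega>))) = Hv P (\<lambda>\<omega>. (W \<omega>, K \<omega>))"
      by (rule Hv_cong[OF fin]) (auto simp: K_def)
    show ?thesis using sm e1 e2 e3 h6 h2 unfolding W_def by simp
  qed
  have d: "Hv P (\<lambda>\<omega>. (W \<omega>, K \<omega>)) - Hv P (\<lambda>\<omega>. (W1 \<omega>, K \<omega>))
      \<le> Hv P (\<lambda>\<omega>. ((W1 \<omega>, Yi \<omega>), T \<omega>)) - Hv P (\<lambda>\<omega>. (W1 \<omega>, Yi \<omega>))"
  proof -
    have sm: "Hv P (\<lambda>\<omega>. ((T \<omega>, (W1 \<omega>, Yi \<omega>)), K \<omega>)) + Hv P (\<lambda>\<omega>. (W1 \<omega>, Yi \<omega>))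
        \<le> Hv P (\<lambda>\<omega>. (T \<omega>, (W1 \<omega>, Yi \<omega>))) + Hv P (\<lambda>\<omega>. ((W1 \<omega>, Yi \<omega>), K \<omega>))"
      by (rule Hv_submod[OF fin])
    have e1: "Hv P (\<lambda>\<omega>. ((T \<omega>, (W1 \<omega>, Yi \<omega>)), K \<omega>)) = Hv P (\<lambda>\<omega>. (W \<omega>, K \<omega>))"
    proof (rule Hv_cong[OF fin])
      fix \<omega> \<omega>' assume w: "\<omega> \<in> set_pmf P" "\<omega>' \<in> set_pmf P"
      show "(W \<omega>, K \<omega>) = (W \<omega>', K \<omega>') \<longleftrightarrow> ((T \<omega>, (W1 \<omega>, Yi \<omega>)), K \<omega>) = ((T \<omega>', (W1 \<omega>', Yi \<omega>')), K \<omega>')"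
        using h7[OF w] by (auto simp: W_def K_def)
    qed
    have e2: "Hv P (\<lambda>\<omega>. ((W1 \<omega>, Yi \<omega>), K \<omega>)) = Hv P (\<lambda>\<omega>. (W1 \<omega>, K \<omega>))"
    proof (rule Hv_cong[OF fin])
      fix \<omega> \<omega>' assume w: "\<omega> \<in> set_pmf P" "\<omega>' \<in> set_pmf P"
      show "(W1 \<omega>, K \<omega>) = (W1 \<omega>', K \<omega>') \<longleftrightarrow> ((W1 \<omega>, Yi \<omega>), K \<omega>) = ((W1 \<omega>', Yi \<omega>'), K \<omega>')"
        using h7[OF w] by (auto simp: K_def)
    qed
    have e3: "Hv P (\<lambda>\<omega>. (T \<omega>, (W1 \<omega>, Yi \<omega>))) = Hv P (\<lambda>\<omega>. ((W1 \<omega>, Yi \<omega>), T \<omega>))"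
      by (rule Hv_cong[OF fin]) auto
    show ?thesis using sm e1 e2 e3 by simp
  qed
  show ?thesis using b c d unfolding W_def by simp
qed




definition ycomp :: "nat \<Rightarrow> 'f list \<times> 'f list \<times> 'f list \<times> 'f list \<Rightarrow> 'f list" where
  "ycomp d r = (case r of (y0, y1, y2, y3) \<Rightarrow> if d = 0 then y0 else if d = 1 then y1 else if d = 2 then y2 else y3)"

lemma run_length:
  "case mwrc_run C w1 w2 w3 z t of (y0, y1, y2, y3) \<Rightarrow>
     length y0 = t \<and> length y1 = t \<and> length y2 = t \<and> length y3 = t"
  by (induction t) (auto simp: Let_def split: prod.splits)

lemma comp_length: "length (ycomp d (mwrc_run C w1 w2 w3 z t)) = t"
proof -
  have "case mwrc_run C w1 w2 w3 z t of (y0, y1, y2, y3) \<Rightarrow>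
     length y0 = t \<and> length y1 = t \<and> length y2 = t \<and> length y3 = t" by (rule run_length)
  then show ?thesis by (auto simp: ycomp_def split: prod.splits)
qed

lemma run_Suc_comp:
  "ycomp d (mwrc_run C w1 w2 w3 z (Suc t)) = ycomp d (mwrc_run C w1 w2 w3 z t) @
     [(case mwrc_run C w1 w2 w3 z t of (y0, y1, y2, y3) \<Rightarrow>
        if d = 0 then enc1 C t w1 y1 + enc2 C t w2 y2 + enc3 C t w3 y3 + z (0, t)
        else enc0 C t y0 + z (if d = 1 then 1 else if d = 2 then 2 else 3, t))]"
  by (auto simp: ycomp_def Let_def split: prod.splits)

lemma run_inj:
  fixes z z' :: "nat \<times> nat \<Rightarrow> 'f::field"
  assumes "\<And>x. fst x \<noteq> d \<Longrightarrow> z x = z' x" "d < 4"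
    and "ycomp d (mwrc_run C w1 w2 w3 z n) = ycomp d (mwrc_run C w1 w2 w3 z' n)"
  shows "mwrc_run C w1 w2 w3 z n = mwrc_run C w1 w2 w3 z' n \<and> (\<forall>t<n. z (d, t) = z' (d, t))"
  using assms(3)
proof (induction n)
  case 0 then show ?case by simp
next
  case (Suc n)
  have l: "length (ycomp d (mwrc_run C w1 w2 w3 z n)) = length (ycomp d (mwrc_run C w1 w2 w3 z' n))"
    by (simp add: comp_length)
  from Suc.prems[unfolded run_Suc_comp] l
  have pre: "ycomp d (mwrc_run C w1 w2 w3 z n) = ycomp d (mwrc_run C w1 w2 w3 z' n)"
    and last: "(case mwrc_run C w1 w2 w3 z n of (y0, y1, y2, y3) \<Rightarrow>
        if d = 0 then enc1 C n w1 y1 + enc2 C n w2 y2 + enc3 C n w3 y3 + z (0, n)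
        else enc0 C n y0 + z (if d = 1 then 1 else if d = 2 then 2 else 3, n)) =
       (case mwrc_run C w1 w2 w3 z' n of (y0, y1, y2, y3) \<Rightarrow>
        if d = 0 then enc1 C n w1 y1 + enc2 C n w2 y2 + enc3 C n w3 y3 + z' (0, n)
        else enc0 C n y0 + z' (if d = 1 then 1 else if d = 2 then 2 else 3, n))"
    by auto
  from Suc.IH[OF pre] have IH: "mwrc_run C w1 w2 w3 z n = mwrc_run C w1 w2 w3 z' n" "\<forall>t<n. z (d, t) = z' (d, t)"
    by auto
  obtain y0 y1 y2 y3 where r: "mwrc_run C w1 w2 w3 z n = (y0, y1, y2, y3)" by (cases "mwrc_run C w1 w2 w3 z n") auto
  have d4: "d = 0 \<or> d = 1 \<or> d = 2 \<or> d = 3" using assms(2) by auto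
  have dn: "z (d, n) = z' (d, n)"
    using last d4 unfolding IH(1)[symmetric] r by (auto split: if_splits)
  have all: "z (k, n) = z' (k, n)" for k
    using dn assms(1)[of "(k, n)"] by (cases "k = d") auto
  have "mwrc_run C w1 w2 w3 z (Suc n) = mwrc_run C w1 w2 w3 z' (Suc n)"
    using IH(1) r all by (simp add: Let_def)
  moreover have "\<forall>t<Suc n. z (d, t) = z' (d, t)" using IH(2) dn less_Suc_eq by auto
  ultimately show ?case by simp
qed

lemma comp_user_formula:
  assumes "i \<in> {1, 2, 3::nat}"
  shows "ycomp i (mwrc_run C w1 w2 w3 z n) =
         map (\<lambda>t. enc0 C t (take t (ycomp 0 (mwrc_run C w1 w2 w3 z n))) + z (i, t)) [0..<n]"
proof (induction n)
  case 0 then show ?case by (simp add: ycomp_def)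
next
  case (Suc n)
  have tk: "take t (ycomp 0 (mwrc_run C w1 w2 w3 z (Suc n))) = take t (ycomp 0 (mwrc_run C w1 w2 w3 z n))"
    if "t \<le> n" for t
    using that by (simp del: mwrc_run.simps add: run_Suc_comp comp_length)
  have tn: "take n (ycomp 0 (mwrc_run C w1 w2 w3 z n)) = ycomp 0 (mwrc_run C w1 w2 w3 z n)"
    by (simp add: comp_length)
  have "ycomp i (mwrc_run C w1 w2 w3 z (Suc n)) = ycomp i (mwrc_run C w1 w2 w3 z n) @
          [enc0 C n (ycomp 0 (mwrc_run C w1 w2 w3 z n)) + z (i, n)]"
    using assms by (auto simp: run_Suc_comp ycomp_def Let_def split: prod.splits)
  also have "\<dots> = map (\<lambda>t. enc0 C t (take t (ycomp 0 (mwrc_run C w1 w2 w3 z (Suc n)))) + z (i, t)) [0..<Suc n]"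
    unfolding Suc.IH using tk tn by simp
  finally show ?case .
qed




lemma fin_src: "finite (set_pmf (source_block (p :: ('a::finite \<times> 'b::finite \<times> 'c::finite) pmf) m))"
  unfolding source_block_def by (rule finite_set_Pi_pmf) auto

lemma fin_noise: "finite (set_pmf (noise_block (q :: nat \<Rightarrow> 'f::finite pmf) n))"
  unfolding noise_block_def by (rule finite_set_Pi_pmf) auto

lemma noise_support:
  assumes "z \<in> set_pmf (noise_block q n)" "x \<notin> {..<4} \<times> {..<n}"
  shows "z x = undefined"
  using set_Pi_pmf_subset[of "{..<4::nat} \<times> {..<n}" undefined "\<lambda>(d, t). q d"] assms
  unfolding noise_block_def by (cases x) force

lemma Hv_fst: "Hv (pair_pmf A B) (\<lambda>\<omega>. F (fst \<omega>)) = Hv A F"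
proof -
  have "map_pmf (\<lambda>\<omega>. F (fst \<omega>)) (pair_pmf A B) = map_pmf F (map_pmf fst (pair_pmf A B))"
    by (simp add: pmf.map_comp o_def)
  then show ?thesis unfolding Hv_def by (simp add: map_fst_pair_pmf)
qed

lemma Hv_snd: "Hv (pair_pmf A B) (\<lambda>\<omega>. F (snd \<omega>)) = Hv B F"
proof -
  have "map_pmf (\<lambda>\<omega>. F (snd \<omega>)) (pair_pmf A B) = map_pmf F (map_pmf snd (pair_pmf A B))"
    by (simp add: pmf.map_comp o_def)
  then show ?thesis unfolding Hv_def by (simp add: map_snd_pair_pmf)
qed

lemma Hv_pair_indep:
  assumes "finite (set_pmf A)" "finite (set_pmf B)"
  shows "Hv (pair_pmf A B) (\<lambda>\<omega>. (F (fst \<omega>), H (snd \<omega>))) = Hv A F + Hv B H"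
proof -
  have "map_pmf (\<lambda>\<omega>. (F (fst \<omega>), H (snd \<omega>))) (pair_pmf A B) = pair_pmf (map_pmf F A) (map_pmf H B)"
    using map_pair[of F H A B] by (simp add: case_prod_unfold)
  then show ?thesis unfolding Hv_def using assms by (simp add: Hd_pair)
qed

definition row :: "nat \<Rightarrow> nat \<Rightarrow> (nat \<times> nat \<Rightarrow> 'f) \<Rightarrow> 'f list" where
  "row n d z = map (\<lambda>t. z (d, t)) [0..<n]"

definition rest :: "nat \<Rightarrow> (nat \<times> nat \<Rightarrow> 'f) \<Rightarrow> (nat \<times> nat \<Rightarrow> 'f)" where
  "rest d z = (\<lambda>x. if fst x = d then undefined else z x)"

lemma noise_indep:
  fixes q :: "nat \<Rightarrow> 'f::finite pmf"
  assumes d: "d < 4"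
  shows "Hv (noise_block q n) (\<lambda>z. (rest d z, row n d z)) = Hv (noise_block q n) (rest d) + Hv (noise_block q n) (row n d)"
proof -
  define I where "I = {..<4::nat} \<times> {..<n}"
  define B where "B = {d} \<times> {..<n}"
  define A where "A = I - B"
  define Q where "Q = (\<lambda>(d::nat, t::nat). q d)"
  define mg where "mg = (\<lambda>(f :: nat \<times> nat \<Rightarrow> 'f, g :: nat \<times> nat \<Rightarrow> 'f) x. if x \<in> A then f x else g x)"
  define PA where "PA = Pi_pmf A undefined Q"
  define PB where "PB = Pi_pmf B undefined Q"
  have IAB: "I = A \<union> B" "A \<inter> B = {}" "finite A" "finite B" using d by (auto simp: I_def A_def B_def)
  have noise: "noise_block q n = map_pmf mg (pair_pmf PA PB)"
    unfolding noise_block_def I_def[symmetric] IAB(1) mg_def PA_def PB_def Q_def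
    by (rule Pi_pmf_union) (use IAB in auto)
  have suppA: "f x = undefined" if "f \<in> set_pmf PA" "x \<notin> A" for f x
    using set_Pi_pmf_subset[of A undefined Q] that IAB unfolding PA_def by (cases x) force
  have suppB: "g x = undefined" if "g \<in> set_pmf PB" "x \<notin> B" for g x
    using set_Pi_pmf_subset[of B undefined Q] that IAB unfolding PB_def by (cases x) force
  have r1: "rest d (mg (f, g)) = rest d f" if "f \<in> set_pmf PA" "g \<in> set_pmf PB" for f g
  proof
    fix x show "rest d (mg (f, g)) x = rest d f x"
      using suppA[OF that(1), of x] suppB[OF that(2), of x] by (cases x) (auto simp: rest_def mg_def B_def)
  qed
  have r2: "row n d (mg (f, g)) = row n d g" for f g
    by (auto simp: row_def mg_def A_def B_def)
  have finA: "finite (set_pmf PA)" "finite (set_pmf PB)"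
    unfolding PA_def PB_def using IAB by (auto intro!: finite_set_Pi_pmf)
  have e1: "map_pmf (\<lambda>z. (rest d z, row n d z)) (noise_block q n) = map_pmf (\<lambda>\<omega>. (rest d (fst \<omega>), row n d (snd \<omega>))) (pair_pmf PA PB)"
    unfolding noise pmf.map_comp by (intro map_pmf_cong refl) (auto simp: r1 r2)
  have e2: "map_pmf (rest d) (noise_block q n) = map_pmf (\<lambda>\<omega>. rest d (fst \<omega>)) (pair_pmf PA PB)"
    unfolding noise pmf.map_comp by (intro map_pmf_cong refl) (auto simp: r1)
  have e3: "map_pmf (row n d) (noise_block q n) = map_pmf (\<lambda>\<omega>. row n d (snd \<omega>)) (pair_pmf PA PB)"
    unfolding noise pmf.map_comp by (intro map_pmf_cong refl) (auto simp: r2)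
  show ?thesis
    unfolding Hv_def e1 e2 e3 using Hv_pair_indep[OF finA, of "rest d" "row n d"] Hv_fst Hv_snd
    unfolding Hv_def by metis
qed

lemma row_entropy:
  fixes q :: "nat \<Rightarrow> 'f::finite pmf"
  assumes d: "d < 4"
  shows "Hv (noise_block q n) (row n d) = real n * entropy (q d)"
proof -
  have "Hd (map_pmf (\<lambda>g. map (\<lambda>t. (\<lambda>x. x) (g ((\<lambda>t. (d, t)) t))) [0..<n])
          (Pi_pmf ({..<4} \<times> {..<n}) undefined (\<lambda>(d, t). q d))) = real n * Hd (map_pmf (\<lambda>x. x) (q d))"
    using d by (intro Hd_iid) (auto simp: inj_on_def)
  then show ?thesis unfolding Hv_def noise_block_def row_def entropy_Hd by simp
qed

lemma src_entropy:
  fixes p :: "('a::finite \<times> 'b::finite \<times> 'c::finite) pmf"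
  shows "Hv (source_block p m) (\<lambda>s. map (\<lambda>u. h (s u)) [0..<m]) = real m * Hv p h"
proof -
  have "Hd (map_pmf (\<lambda>g. map (\<lambda>t. h (g ((\<lambda>t. t) t))) [0..<m]) (Pi_pmf {..<m} undefined (\<lambda>_. p)))
        = real m * Hd (map_pmf h p)"
    by (intro Hd_iid) auto
  then show ?thesis unfolding Hv_def source_block_def by simp
qed




lemma map_upt_eq: "map f [0..<m] = map g [0..<m] \<longleftrightarrow> (\<forall>u<m. f u = g u)"
  by (auto simp: map_eq_conv)

lemma user_bound:
  fixes p :: "('a::finite \<times> 'b::finite \<times> 'c::finite) pmf"
    and q :: "nat \<Rightarrow> 'f::{finite,field} pmf"
    and C :: "('f, 'a, 'b, 'c) mwrc_code"
    and fi :: "'a \<times> 'b \<times> 'c \<Rightarrow> 'u::finite" and gj :: "'a \<times> 'b \<times> 'c \<Rightarrow> 'v::finite"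
    and gk :: "'a \<times> 'b \<times> 'c \<Rightarrow> 'w::finite"
    and dec :: "'f list \<Rightarrow> 'u list \<Rightarrow> 'v list \<times> 'w list"
  assumes inj: "\<And>x y. fi x = fi y \<Longrightarrow> gj x = gj y \<Longrightarrow> gk x = gk y \<Longrightarrow> x = y"
    and i: "i \<in> {1, 2, 3}" and d: "d = 0 \<or> d = i"
    and P0: "P0 = pair_pmf (source_block p m) (noise_block q n)"
    and run: "runw = (\<lambda>\<omega>. mwrc_run C (map (\<lambda>u. fst (fst \<omega> u)) [0..<m]) (map (\<lambda>u. fst (snd (fst \<omega> u))) [0..<m])
                       (map (\<lambda>u. snd (snd (fst \<omega> u))) [0..<m]) (snd \<omega>) n)"
    and e: "e = (\<Sum>\<omega>\<in>{\<omega>\<in>set_pmf P0. dec (ycomp i (runw \<omega>)) (map (\<lambda>u. fi (fst \<omega> u)) [0..<m])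
                   \<noteq> (map (\<lambda>u. gj (fst \<omega> u)) [0..<m], map (\<lambda>u. gk (fst \<omega> u)) [0..<m])}. pmf P0 \<omega>)"
  shows "real m * cond_entropy p (\<lambda>w. (gj w, gk w)) fi
         \<le> real n * (log 2 CARD('f) - entropy (q d))
           + (- (1 - e) * log 2 (1 - e) - e * log 2 e + e * log 2 (real (CARD('v) ^ m * CARD('w) ^ m)))"
proof -
  define Fs where "Fs = (\<lambda>s :: nat \<Rightarrow> 'a \<times> 'b \<times> 'c. map (\<lambda>u. fi (s u)) [0..<m])"
  define Ts where "Ts = (\<lambda>s :: nat \<Rightarrow> 'a \<times> 'b \<times> 'c. (map (\<lambda>u. gj (s u)) [0..<m], map (\<lambda>u. gk (s u)) [0..<m]))"
  define Gz where "Gz = (\<lambda>z :: nat \<times> nat \<Rightarrow> 'f. if d = 0 then row n i z else [])"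
  define Wi where "Wi = (\<lambda>\<omega> :: (nat \<Rightarrow> 'a \<times> 'b \<times> 'c) \<times> (nat \<times> nat \<Rightarrow> 'f). Fs (fst \<omega>))"
  define T where "T = (\<lambda>\<omega> :: (nat \<Rightarrow> 'a \<times> 'b \<times> 'c) \<times> (nat \<times> nat \<Rightarrow> 'f). Ts (fst \<omega>))"
  define G where "G = (\<lambda>\<omega> :: (nat \<Rightarrow> 'a \<times> 'b \<times> 'c) \<times> (nat \<times> nat \<Rightarrow> 'f). Gz (snd \<omega>))"
  define R where "R = (\<lambda>\<omega> :: (nat \<Rightarrow> 'a \<times> 'b \<times> 'c) \<times> (nat \<times> nat \<Rightarrow> 'f). rest d (snd \<omega>))"
  define N where "N = (\<lambda>\<omega> :: (nat \<Rightarrow> 'a \<times> 'b \<times> 'c) \<times> (nat \<times> nat \<Rightarrow> 'f). row n d (snd \<omega>))"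
  define Ys where "Ys = (\<lambda>\<omega>. ycomp d (runw \<omega>))"
  define Yi where "Yi = (\<lambda>\<omega>. ycomp i (runw \<omega>))"
  have fin: "finite (set_pmf P0)" unfolding P0 set_pair_pmf by (intro finite_cartesian_product fin_src fin_noise)
  have d4: "d < 4" "i < 4" "i \<noteq> 0" using d i by auto
  have finp: "finite (set_pmf p)" by simp
  have eqW: "map (\<lambda>u. fst (s u)) [0..<m] = map (\<lambda>u. fst (s' u)) [0..<m]
           \<and> map (\<lambda>u. fst (snd (s u))) [0..<m] = map (\<lambda>u. fst (snd (s' u))) [0..<m]
           \<and> map (\<lambda>u. snd (snd (s u))) [0..<m] = map (\<lambda>u. snd (snd (s' u))) [0..<m]"
    if "Fs s = Fs s'" "Ts s = Ts s'" for s s'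
  proof -
    have "\<forall>u<m. s u = s' u" using that inj unfolding Fs_def Ts_def map_upt_eq by auto
    then show ?thesis unfolding map_upt_eq by auto
  qed
  have h1: "Hv P0 (\<lambda>\<omega>. (Wi \<omega>, G \<omega>)) = Hv P0 Wi + Hv P0 G"
    unfolding Wi_def G_def P0 Hv_pair_indep[OF fin_src fin_noise] Hv_fst Hv_snd ..
  have h2: "Hv P0 (\<lambda>\<omega>. ((Wi \<omega>, T \<omega>), G \<omega>)) = Hv P0 (\<lambda>\<omega>. (Wi \<omega>, T \<omega>)) + Hv P0 G"
    using Hv_pair_indep[where F="\<lambda>s. (Fs s, Ts s)" and H=Gz and A="source_block p m" and B="noise_block q n", OF fin_src fin_noise]
          Hv_fst[of "source_block p m" "noise_block q n" "\<lambda>s. (Fs s, Ts s)"]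
    unfolding Wi_def G_def T_def P0 Hv_snd by simp
  have h3: "Hv P0 Ys \<le> real n * log 2 CARD('f)"
  proof -
    have "Hv P0 Ys \<le> log 2 (card {xs :: 'f list. set xs \<subseteq> UNIV \<and> length xs = n})"
      using finite_lists_length_eq[of "UNIV::'f set" n]
      by (intro Hv_card[OF fin]) (auto simp: Ys_def run comp_length)
    also have "\<dots> = real n * log 2 CARD('f)"
      using card_lists_length_eq[of "UNIV::'f set" n] by (simp add: log_nat_power)
    finally show ?thesis .
  qed
  have h4: "G \<omega> = G \<omega>'" if "R \<omega> = R \<omega>'" for \<omega> \<omega>'
  proof (cases "d = 0")
    case True
    have "snd \<omega> (i, t) = snd \<omega>' (i, t)" for t
      using fun_cong[OF that[unfolded R_def], of "(i, t)"] True d4 by (simp add: rest_def)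
    then show ?thesis using True by (simp add: G_def Gz_def row_def)
  qed (simp add: G_def Gz_def)
  have supp: "snd \<omega> = snd \<omega>'" if w: "\<omega> \<in> set_pmf P0" "\<omega>' \<in> set_pmf P0" and "R \<omega> = R \<omega>'" "N \<omega> = N \<omega>'" for \<omega> \<omega>'
  proof
    fix x :: "nat \<times> nat"
    obtain d' t where x: "x = (d', t)" by (cases x)
    have zn: "snd \<omega> \<in> set_pmf (noise_block q n)" "snd \<omega>' \<in> set_pmf (noise_block q n)"
      using w unfolding P0 by auto
    show "snd \<omega> x = snd \<omega>' x"
    proof (cases "d' = d")
      case False
      then show ?thesis using fun_cong[OF that(3)[unfolded R_def], of x] x by (simp add: rest_def)
    next
      case True
      show ?thesis
      proof (cases "t < n")
        case True
        then show ?thesis using that(4) \<open>d' = d\<close> x by (simp add: N_def row_def map_upt_eq)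
      next
        case False
        then show ?thesis using noise_support[OF zn(1), of x] noise_support[OF zn(2), of x] x by auto
      qed
    qed
  qed
  have h5: "Ys \<omega> = Ys \<omega>' \<longleftrightarrow> N \<omega> = N \<omega>'"
    if w: "\<omega> \<in> set_pmf P0" "\<omega>' \<in> set_pmf P0" and eq: "Wi \<omega> = Wi \<omega>'" "T \<omega> = T \<omega>'" "R \<omega> = R \<omega>'" for \<omega> \<omega>'
  proof
    have L: "map (\<lambda>u. fst (fst \<omega> u)) [0..<m] = map (\<lambda>u. fst (fst \<omega>' u)) [0..<m]"
         "map (\<lambda>u. fst (snd (fst \<omega> u))) [0..<m] = map (\<lambda>u. fst (snd (fst \<omega>' u))) [0..<m]"
         "map (\<lambda>u. snd (snd (fst \<omega> u))) [0..<m] = map (\<lambda>u. snd (snd (fst \<omega>' u))) [0..<m]"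
      using eqW[of "fst \<omega>" "fst \<omega>'"] eq by (auto simp: Wi_def T_def)
    assume "N \<omega> = N \<omega>'"
    then have "snd \<omega> = snd \<omega>'" using supp[OF w eq(3)] by simp
    then show "Ys \<omega> = Ys \<omega>'" unfolding Ys_def run L by simp
  next
    have L: "map (\<lambda>u. fst (fst \<omega> u)) [0..<m] = map (\<lambda>u. fst (fst \<omega>' u)) [0..<m]"
         "map (\<lambda>u. fst (snd (fst \<omega> u))) [0..<m] = map (\<lambda>u. fst (snd (fst \<omega>' u))) [0..<m]"
         "map (\<lambda>u. snd (snd (fst \<omega> u))) [0..<m] = map (\<lambda>u. snd (snd (fst \<omega>' u))) [0..<m]"
      using eqW[of "fst \<omega>" "fst \<omega>'"] eq by (auto simp: Wi_def T_def)
    assume "Ys \<omega> = Ys \<omega>'"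
    then have "ycomp d (mwrc_run C (map (\<lambda>u. fst (fst \<omega>' u)) [0..<m]) (map (\<lambda>u. fst (snd (fst \<omega>' u))) [0..<m])
                       (map (\<lambda>u. snd (snd (fst \<omega>' u))) [0..<m]) (snd \<omega>) n)
             = ycomp d (mwrc_run C (map (\<lambda>u. fst (fst \<omega>' u)) [0..<m]) (map (\<lambda>u. fst (snd (fst \<omega>' u))) [0..<m])
                       (map (\<lambda>u. snd (snd (fst \<omega>' u))) [0..<m]) (snd \<omega>') n)"
      unfolding Ys_def run L .
    moreover have "\<And>x. fst x \<noteq> d \<Longrightarrow> snd \<omega> x = snd \<omega>' x"
      using eq(3) unfolding R_def rest_def by (metis (mono_tags))
    ultimately have "\<forall>t<n. snd \<omega> (d, t) = snd \<omega>' (d, t)" using run_inj d4(1) by blast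
    then show "N \<omega> = N \<omega>'" by (simp add: N_def row_def map_upt_eq)
  qed
  have h6: "Hv P0 (\<lambda>\<omega>. (((Wi \<omega>, T \<omega>), R \<omega>), N \<omega>)) = Hv P0 (\<lambda>\<omega>. ((Wi \<omega>, T \<omega>), R \<omega>)) + Hv P0 N"
  proof -
    have "Hv P0 (\<lambda>\<omega>. (((Wi \<omega>, T \<omega>), R \<omega>), N \<omega>)) = Hv P0 (\<lambda>\<omega>. ((Fs (fst \<omega>), Ts (fst \<omega>)), (rest d (snd \<omega>), row n d (snd \<omega>))))"
      by (rule Hv_cong[OF fin]) (auto simp: Wi_def T_def R_def N_def)
    also have "\<dots> = Hv (source_block p m) (\<lambda>s. (Fs s, Ts s)) + Hv (noise_block q n) (\<lambda>z. (rest d z, row n d z))"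
      unfolding P0 by (rule Hv_pair_indep[OF fin_src fin_noise])
    also have "\<dots> = Hv (source_block p m) (\<lambda>s. (Fs s, Ts s)) + Hv (noise_block q n) (rest d) + Hv (noise_block q n) (row n d)"
      using noise_indep[OF d4(1)] by simp
    finally have a: "Hv P0 (\<lambda>\<omega>. (((Wi \<omega>, T \<omega>), R \<omega>), N \<omega>)) = \<dots>" .
    have b: "Hv P0 (\<lambda>\<omega>. ((Wi \<omega>, T \<omega>), R \<omega>)) = Hv (source_block p m) (\<lambda>s. (Fs s, Ts s)) + Hv (noise_block q n) (rest d)"
      using Hv_pair_indep[where F="\<lambda>s. (Fs s, Ts s)" and H="rest d" and A="source_block p m" and B="noise_block q n", OF fin_src fin_noise]
      unfolding Wi_def T_def R_def P0 by simp
    have c: "Hv P0 N = Hv (noise_block q n) (row n d)" unfolding N_def P0 by (rule Hv_snd)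
    show ?thesis using a b c by simp
  qed
  have h7: "Yi \<omega> = Yi \<omega>'" if "Ys \<omega> = Ys \<omega>'" "G \<omega> = G \<omega>'" for \<omega> \<omega>'
  proof (cases "d = 0")
    case True
    then have "row n i (snd \<omega>) = row n i (snd \<omega>')" using that(2) by (simp add: G_def Gz_def)
    then have "\<forall>t<n. snd \<omega> (i, t) = snd \<omega>' (i, t)" by (simp add: row_def map_upt_eq)
    moreover have fm: "ycomp i (runw \<omega>) = map (\<lambda>t. enc0 C t (take t (ycomp 0 (runw \<omega>))) + snd \<omega> (i, t)) [0..<n]" for \<omega>
      unfolding run by (rule comp_user_formula[OF i])
    ultimately show ?thesis using that(1) True unfolding Yi_def Ys_def fm
      by (simp add: map_upt_eq)
  next
    case False
    then show ?thesis using d that(1) by (simp add: Yi_def Ys_def)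
  qed
  have cut: "Hv P0 (\<lambda>\<omega>. (Wi \<omega>, T \<omega>)) - Hv P0 Wi
         \<le> real n * log 2 CARD('f) - Hv P0 N + (Hv P0 (\<lambda>\<omega>. ((Wi \<omega>, Yi \<omega>), T \<omega>)) - Hv P0 (\<lambda>\<omega>. (Wi \<omega>, Yi \<omega>)))"
    by (rule cut_lemma[OF fin h1 h2 h3 _ h5 h6]) (blast intro: h4 h7)+
  define B where "B = {xs :: 'v list. set xs \<subseteq> UNIV \<and> length xs = m} \<times> {xs :: 'w list. set xs \<subseteq> UNIV \<and> length xs = m}"
  have cardB: "card B = CARD('v) ^ m * CARD('w) ^ m"
    using card_lists_length_eq[of "UNIV::'v set" m] card_lists_length_eq[of "UNIV::'w set" m]
    unfolding B_def by (simp add: card_cartesian_product)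
  have fano': "Hv P0 (\<lambda>\<omega>. ((Wi \<omega>, Yi \<omega>), T \<omega>)) - Hv P0 (\<lambda>\<omega>. (Wi \<omega>, Yi \<omega>))
      \<le> - (1 - e) * log 2 (1 - e) - e * log 2 e + e * log 2 (card B)"
  proof (rule fano[OF fin, where g = "\<lambda>(w, y). dec y w"])
    show "finite B" unfolding B_def
      using finite_lists_length_eq[of "UNIV::'v set" m] finite_lists_length_eq[of "UNIV::'w set" m] by simp
    show "T ` set_pmf P0 \<subseteq> B" by (auto simp: B_def T_def Ts_def)
    show "e = (\<Sum>\<omega>\<in>{\<omega> \<in> set_pmf P0. (case (Wi \<omega>, Yi \<omega>) of (w, y) \<Rightarrow> dec y w) \<noteq> T \<omega>}. pmf P0 \<omega>)"
      unfolding e by (simp add: Wi_def Yi_def T_def Fs_def Ts_def)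
  qed
  have HN: "Hv P0 N = real n * entropy (q d)"
    unfolding N_def P0 Hv_snd by (rule row_entropy[OF d4(1)])
  have HWT: "Hv P0 (\<lambda>\<omega>. (Wi \<omega>, T \<omega>)) = real m * Hv p (\<lambda>w. (fi w, gj w, gk w))"
  proof -
    have "Hv P0 (\<lambda>\<omega>. (Wi \<omega>, T \<omega>)) = Hv (source_block p m) (\<lambda>s. (Fs s, Ts s))"
      unfolding Wi_def T_def P0 by (rule Hv_fst)
    also have "\<dots> = Hv (source_block p m) (\<lambda>s. map (\<lambda>u. (fi (s u), gj (s u), gk (s u))) [0..<m])"
      by (rule Hv_cong[OF fin_src]) (auto simp: Fs_def Ts_def map_upt_eq)
    also have "\<dots> = real m * Hv p (\<lambda>w. (fi w, gj w, gk w))" by (rule src_entropy)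
    finally show ?thesis .
  qed
  have HW: "Hv P0 Wi = real m * Hv p fi"
    unfolding Wi_def P0 Hv_fst unfolding Fs_def by (rule src_entropy)
  have CE: "cond_entropy p (\<lambda>w. (gj w, gk w)) fi = Hv p (\<lambda>w. (fi w, gj w, gk w)) - Hv p fi"
    by (rule cond_entropy_Hv[OF finp])
  have M: "real m * cond_entropy p (\<lambda>w. (gj w, gk w)) fi = Hv P0 (\<lambda>\<omega>. (Wi \<omega>, T \<omega>)) - Hv P0 Wi"
    using CE HWT HW by (simp add: right_diff_distrib)
  have dist: "real n * (log 2 CARD('f) - entropy (q d)) = real n * log 2 CARD('f) - real n * entropy (q d)"
    by (simp add: right_diff_distrib)
  show ?thesis using cut fano'[unfolded cardB] HN M dist by linarith
qed




lemma xlogx_bound: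
  fixes e :: real
  assumes "0 \<le> e" "e \<le> 1"
  shows "- (1 - e) * log 2 (1 - e) - e * log 2 e \<le> (2 * sqrt e + e) / ln 2"
proof -
  have a: "- e * ln e \<le> 2 * sqrt e"
  proof (cases "e = 0")
    case False
    then have ep: "e > 0" using assms by simp
    have s: "sqrt e > 0" using ep by simp
    have "- ln e = 2 * ln (1 / sqrt e)" using ep by (simp add: ln_div ln_sqrt)
    also have "\<dots> \<le> 2 * (1 / sqrt e - 1)" using s by (intro mult_left_mono ln_le_minus_one) simp_all
    finally have "- ln e \<le> 2 * (1 / sqrt e - 1)" .
    moreover have "2 * (1 / sqrt e - 1) = 2 / sqrt e - 2" by (simp add: field_simps)
    ultimately have "- ln e \<le> 2 / sqrt e" by linarith
    then have "e * (- ln e) \<le> e * (2 / sqrt e)" using ep by (intro mult_left_mono) auto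
    also have "e * (2 / sqrt e) = 2 * sqrt e" using ep
      by (metis real_div_sqrt times_divide_eq_right less_eq_real_def mult.commute)
    finally show ?thesis by simp
  qed simp
  have b: "- (1 - e) * ln (1 - e) \<le> e"
  proof (cases "e = 1")
    case False
    then have ep: "1 - e > 0" using assms by simp
    have "ln (1 / (1 - e)) \<le> 1 / (1 - e) - 1" using ep by (intro ln_le_minus_one) simp
    then have "- ln (1 - e) \<le> e / (1 - e)" using ep by (simp add: ln_div field_simps)
    then have "(1 - e) * (- ln (1 - e)) \<le> (1 - e) * (e / (1 - e))" using ep by (intro mult_left_mono) auto
    moreover have "(1 - e) * (e / (1 - e)) = e" using ep by simp
    ultimately have "(1 - e) * (- ln (1 - e)) \<le> e" by linarith
    then show ?thesis by (simp add: algebra_simps)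
  qed simp
  have "- (1 - e) * log 2 (1 - e) - e * log 2 e = (- (1 - e) * ln (1 - e) + (- e * ln e)) / ln 2"
  proof -
    have l2: "ln (2::real) \<noteq> 0" by simp
    show ?thesis by (simp add: log_def field_simps l2)
  qed
  also have "\<dots> \<le> (e + 2 * sqrt e) / ln 2"
    using a b by (intro divide_right_mono) auto
  finally show ?thesis by (simp add: add.commute)
qed

lemma limit_arg:
  fixes h b LK :: real
  assumes "\<And>\<zeta>. \<zeta> > 0 \<Longrightarrow> h \<le> b + ((2 * sqrt \<zeta> + \<zeta>) / ln 2 + \<zeta> * LK)"
  shows "h \<le> b"
proof (rule ccontr)
  assume "\<not> h \<le> b"
  then have \<delta>: "h - b > 0" by simp
  have "((\<lambda>\<zeta>. (2 * sqrt \<zeta> + \<zeta>) / ln 2 + \<zeta> * LK) \<longlongrightarrow> (2 * sqrt 0 + 0) / ln 2 + 0 * LK) (at_right (0::real))"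
    by (intro tendsto_intros) auto
  then have "((\<lambda>\<zeta>. (2 * sqrt \<zeta> + \<zeta>) / ln 2 + \<zeta> * LK) \<longlongrightarrow> 0) (at_right (0::real))" by simp
  from order_tendstoD(2)[OF this \<delta>]
  have "eventually (\<lambda>\<zeta>. (2 * sqrt \<zeta> + \<zeta>) / ln 2 + \<zeta> * LK < h - b) (at_right (0::real))" .
  moreover have "eventually (\<lambda>\<zeta>. \<zeta> > (0::real)) (at_right 0)" by (simp add: eventually_at_right_less)
  ultimately have "eventually (\<lambda>\<zeta>. \<zeta> > 0 \<and> (2 * sqrt \<zeta> + \<zeta>) / ln 2 + \<zeta> * LK < h - b) (at_right (0::real))"
    by (rule eventually_conj[OF _ _, rotated])
  then obtain \<zeta> where "\<zeta> > 0" "(2 * sqrt \<zeta> + \<zeta>) / ln 2 + \<zeta> * LK < h - b"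
    using eventually_happens[of _ "at_right (0::real)"] trivial_limit_at_right_real by blast
  then show False using assms[of \<zeta>] by simp
qed

lemma sum_le_measure:
  assumes "finite (set_pmf M)" "\<And>\<omega>. \<omega> \<in> set_pmf M \<Longrightarrow> Q \<omega> \<Longrightarrow> \<omega> \<in> E"
  shows "(\<Sum>\<omega>\<in>{\<omega>\<in>set_pmf M. Q \<omega>}. pmf M \<omega>) \<le> measure M E"
proof -
  have "measure M E = measure M (E \<inter> set_pmf M)" by (simp add: measure_Int_set_pmf)
  also have "\<dots> = sum (pmf M) (E \<inter> set_pmf M)" using assms(1) by (intro measure_measure_pmf_finite) auto
  also have "\<dots> \<ge> (\<Sum>\<omega>\<in>{\<omega>\<in>set_pmf M. Q \<omega>}. pmf M \<omega>)"
    using assms by (intro sum_mono2) auto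
  finally show ?thesis .
qed




lemma rate_bound:
  fixes p :: "('a::finite \<times> 'b::finite \<times> 'c::finite) pmf"
    and q :: "nat \<Rightarrow> 'f::{finite,field} pmf"
    and fi :: "'a \<times> 'b \<times> 'c \<Rightarrow> 'u::finite" and gj :: "'a \<times> 'b \<times> 'c \<Rightarrow> 'v::finite"
    and gk :: "'a \<times> 'b \<times> 'c \<Rightarrow> 'w::finite"
    and dec :: "('f, 'a, 'b, 'c) mwrc_code \<Rightarrow> 'f list \<Rightarrow> 'u list \<Rightarrow> 'v list \<times> 'w list"
  assumes ach: "achievable p q \<kappa>"
    and inj: "\<And>x y. fi x = fi y \<Longrightarrow> gj x = gj y \<Longrightarrow> gk x = gk y \<Longrightarrow> x = y"
    and i: "i \<in> {1, 2, 3}" and d: "d = 0 \<or> d = i"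
    and err: "\<And>C m n. (\<Sum>\<omega>\<in>{\<omega>\<in>set_pmf (pair_pmf (source_block p m) (noise_block q n)).
                 dec C (ycomp i (mwrc_run C (map (\<lambda>u. fst (fst \<omega> u)) [0..<m]) (map (\<lambda>u. fst (snd (fst \<omega> u))) [0..<m])
                       (map (\<lambda>u. snd (snd (fst \<omega> u))) [0..<m]) (snd \<omega>) n)) (map (\<lambda>u. fi (fst \<omega> u)) [0..<m])
                   \<noteq> (map (\<lambda>u. gj (fst \<omega> u)) [0..<m], map (\<lambda>u. gk (fst \<omega> u)) [0..<m])}.
                 pmf (pair_pmf (source_block p m) (noise_block q n)) \<omega>) \<le> err_prob p q C m n"
  shows "cond_entropy p (\<lambda>w. (gj w, gk w)) fi \<le> \<kappa> * (log 2 CARD('f) - entropy (q d))"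
proof (rule limit_arg[where LK = "log 2 CARD('v) + log 2 CARD('w)"])
  fix \<zeta> :: real assume \<zeta>: "\<zeta> > 0"
  define LK where "LK = log 2 CARD('v) + log 2 CARD('w)"
  define A where "A = log 2 CARD('f) - entropy (q d)"
  define h where "h = cond_entropy p (\<lambda>w. (gj w, gk w)) fi"
  define B\<zeta> where "B\<zeta> = (2 * sqrt \<zeta> + \<zeta>) / ln 2"
  obtain m n and C :: "('f, 'a, 'b, 'c) mwrc_code" where mn: "m > 0" "real n / real m = \<kappa>" "err_prob p q C m n < \<zeta>"
    using ach \<zeta> unfolding achievable_def by blast
  define P0 where "P0 = pair_pmf (source_block p m) (noise_block q n)"
  define runw where "runw = (\<lambda>\<omega> :: (nat \<Rightarrow> 'a \<times> 'b \<times> 'c) \<times> (nat \<times> nat \<Rightarrow> 'f). mwrc_run C (map (\<lambda>u. fst (fst \<omega> u)) [0..<m]) (map (\<lambda>u. fst (snd (fst \<omega> u))) [0..<m])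
                       (map (\<lambda>u. snd (snd (fst \<omega> u))) [0..<m]) (snd \<omega>) n)"
  define e where "e = (\<Sum>\<omega>\<in>{\<omega>\<in>set_pmf P0. dec C (ycomp i (runw \<omega>)) (map (\<lambda>u. fi (fst \<omega> u)) [0..<m])
                   \<noteq> (map (\<lambda>u. gj (fst \<omega> u)) [0..<m], map (\<lambda>u. gk (fst \<omega> u)) [0..<m])}. pmf P0 \<omega>)"
  have fin: "finite (set_pmf P0)" unfolding P0_def set_pair_pmf by (intro finite_cartesian_product fin_src fin_noise)
  have UB: "real m * h \<le> real n * A + (- (1 - e) * log 2 (1 - e) - e * log 2 e + e * log 2 (real (CARD('v) ^ m * CARD('w) ^ m)))"
    unfolding h_def A_def by (rule user_bound[OF inj i d P0_def runw_def e_def])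
  have e0: "e \<ge> 0" unfolding e_def by (intro sum_nonneg) auto
  have e1: "e \<le> 1"
  proof -
    have "e \<le> (\<Sum>\<omega>\<in>set_pmf P0. pmf P0 \<omega>)" unfolding e_def using fin by (intro sum_mono2) auto
    then show ?thesis using sum_pmf_set[OF fin] by simp
  qed
  have e\<zeta>: "e < \<zeta>" using err[where C=C and m=m and n=n] mn(3) unfolding e_def P0_def runw_def by simp
  have LK0: "LK \<ge> 0" unfolding LK_def by simp
  have logK: "log 2 (real (CARD('v) ^ m * CARD('w) ^ m)) = real m * LK"
    by (simp add: LK_def log_mult log_nat_power algebra_simps)
  have bin: "- (1 - e) * log 2 (1 - e) - e * log 2 e \<le> B\<zeta>"
  proof -
    have "- (1 - e) * log 2 (1 - e) - e * log 2 e \<le> (2 * sqrt e + e) / ln 2" by (rule xlogx_bound[OF e0 e1])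
    also have "\<dots> \<le> B\<zeta>" unfolding B\<zeta>_def using e\<zeta> e0 by (intro divide_right_mono add_mono mult_left_mono real_sqrt_le_mono) auto
    finally show ?thesis .
  qed
  have eLK: "e * (real m * LK) \<le> \<zeta> * (real m * LK)" using e\<zeta> LK0 by (intro mult_right_mono) auto
  have B0: "B\<zeta> \<ge> 0" unfolding B\<zeta>_def using \<zeta> by simp
  have m1: "real m \<ge> 1" using mn(1) by simp
  have n\<kappa>: "real n = real m * \<kappa>" using mn(1,2) by (auto simp: field_simps)
  have "real m * h \<le> real m * (\<kappa> * A + (B\<zeta> + \<zeta> * LK))"
  proof -
    have "real m * h \<le> real n * A + B\<zeta> + \<zeta> * (real m * LK)" using UB bin eLK logK by simp
    also have "\<dots> \<le> real n * A + real m * B\<zeta> + \<zeta> * (real m * LK)"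
      using m1 B0 by (simp add: mult_le_cancel_right1 mult_right_mono)
    also have "\<dots> = real m * (\<kappa> * A + (B\<zeta> + \<zeta> * LK))" unfolding n\<kappa> by (simp add: algebra_simps)
    finally show ?thesis .
  qed
  then have "h \<le> \<kappa> * A + (B\<zeta> + \<zeta> * LK)" using mn(1) by (simp add: mult_le_cancel_left_pos)
  then show "cond_entropy p (\<lambda>w. (gj w, gk w)) fi
          \<le> \<kappa> * (log 2 CARD('f) - entropy (q d)) + ((2 * sqrt \<zeta> + \<zeta>) / ln 2 + \<zeta> * (log 2 CARD('v) + log 2 CARD('w)))"
    unfolding h_def A_def B\<zeta>_def LK_def by simp
qed




lemma fin_P0: "finite (set_pmf (pair_pmf (source_block (p :: ('a::finite \<times> 'b::finite \<times> 'c::finite) pmf) m) (noise_block (q :: nat \<Rightarrow> 'f::finite pmf) n)))"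
  unfolding set_pair_pmf by (intro finite_cartesian_product fin_src fin_noise)

lemma err_user1:
  fixes p :: "('a::finite \<times> 'b::finite \<times> 'c::finite) pmf" and q :: "nat \<Rightarrow> 'f::{finite,field} pmf"
    and C :: "('f, 'a, 'b, 'c) mwrc_code"
  shows "(\<Sum>\<omega>\<in>{\<omega>\<in>set_pmf (pair_pmf (source_block p m) (noise_block q n)).
                 dec1 C (ycomp 1 (mwrc_run C (map (\<lambda>u. fst (fst \<omega> u)) [0..<m]) (map (\<lambda>u. fst (snd (fst \<omega> u))) [0..<m])
                       (map (\<lambda>u. snd (snd (fst \<omega> u))) [0..<m]) (snd \<omega>) n)) (map (\<lambda>u. fst (fst \<omega> u)) [0..<m])
                   \<noteq> (map (\<lambda>u. fst (snd (fst \<omega> u))) [0..<m], map (\<lambda>u. snd (snd (fst \<omega> u))) [0..<m])}.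
                 pmf (pair_pmf (source_block p m) (noise_block q n)) \<omega>) \<le> err_prob p q C m n"
  unfolding err_prob_def
  by (rule sum_le_measure[OF fin_P0]) (auto simp: Let_def ycomp_def split: prod.splits)

lemma err_user2:
  fixes p :: "('a::finite \<times> 'b::finite \<times> 'c::finite) pmf" and q :: "nat \<Rightarrow> 'f::{finite,field} pmf"
    and C :: "('f, 'a, 'b, 'c) mwrc_code"
  shows "(\<Sum>\<omega>\<in>{\<omega>\<in>set_pmf (pair_pmf (source_block p m) (noise_block q n)).
                 dec2 C (ycomp 2 (mwrc_run C (map (\<lambda>u. fst (fst \<omega> u)) [0..<m]) (map (\<lambda>u. fst (snd (fst \<omega> u))) [0..<m])
                       (map (\<lambda>u. snd (snd (fst \<omega> u))) [0..<m]) (snd \<omega>) n)) (map (\<lambda>u. fst (snd (fst \<omega> u))) [0..<m])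
                   \<noteq> (map (\<lambda>u. fst (fst \<omega> u)) [0..<m], map (\<lambda>u. snd (snd (fst \<omega> u))) [0..<m])}.
                 pmf (pair_pmf (source_block p m) (noise_block q n)) \<omega>) \<le> err_prob p q C m n"
  unfolding err_prob_def
  by (rule sum_le_measure[OF fin_P0]) (auto simp: Let_def ycomp_def split: prod.splits)

lemma err_user3:
  fixes p :: "('a::finite \<times> 'b::finite \<times> 'c::finite) pmf" and q :: "nat \<Rightarrow> 'f::{finite,field} pmf"
    and C :: "('f, 'a, 'b, 'c) mwrc_code"
  shows "(\<Sum>\<omega>\<in>{\<omega>\<in>set_pmf (pair_pmf (source_block p m) (noise_block q n)).
                 dec3 C (ycomp 3 (mwrc_run C (map (\<lambda>u. fst (fst \<omega> u)) [0..<m]) (map (\<lambda>u. fst (snd (fst \<omega> u))) [0..<m])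
                       (map (\<lambda>u. snd (snd (fst \<omega> u))) [0..<m]) (snd \<omega>) n)) (map (\<lambda>u. snd (snd (fst \<omega> u))) [0..<m])
                   \<noteq> (map (\<lambda>u. fst (fst \<omega> u)) [0..<m], map (\<lambda>u. fst (snd (fst \<omega> u))) [0..<m])}.
                 pmf (pair_pmf (source_block p m) (noise_block q n)) \<omega>) \<le> err_prob p q C m n"
  unfolding err_prob_def
  by (rule sum_le_measure[OF fin_P0]) (auto simp: Let_def ycomp_def split: prod.splits)

lemma ratio_le:
  fixes h k L H0 H1 :: real
  assumes "h \<le> k * (L - H0)" "h \<le> k * (L - H1)" "H0 < L" "H1 < L"
  shows "h / (L - max H0 H1) \<le> k"
proof -
  have "h \<le> k * (L - max H0 H1)" using assms by (cases "H0 \<le> H1") (auto simp: max_def)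
  moreover have "L - max H0 H1 > 0" using assms by simp
  ultimately show ?thesis by (simp add: pos_divide_le_eq mult.commute)
qed

lemma per_user:
  fixes p :: "('a::finite \<times> 'b::finite \<times> 'c::finite) pmf"
    and q :: "nat \<Rightarrow> 'f::{finite,field} pmf"
  assumes ent: "\<forall>d<4. entropy (q d) < log 2 (real CARD('f))" and ach: "achievable p q \<kappa>"
  shows "cond_entropy p (\<lambda>(w1, w2, w3). (w2, w3)) (\<lambda>(w1, w2, w3). w1)
               / (log 2 (real CARD('f)) - max (entropy (q 0)) (entropy (q 1))) \<le> \<kappa>"
    "cond_entropy p (\<lambda>(w1, w2, w3). (w1, w3)) (\<lambda>(w1, w2, w3). w2)
               / (log 2 (real CARD('f)) - max (entropy (q 0)) (entropy (q 2))) \<le> \<kappa>"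
    "cond_entropy p (\<lambda>(w1, w2, w3). (w1, w2)) (\<lambda>(w1, w2, w3). w3)
               / (log 2 (real CARD('f)) - max (entropy (q 0)) (entropy (q 3))) \<le> \<kappa>"
proof -
  have E: "entropy (q d) < log 2 (real CARD('f))" if "d < 4" for d using ent that by blast
  have f1: "(\<lambda>(w1 :: 'a, w2 :: 'b, w3 :: 'c). (w2, w3)) = (\<lambda>w. (fst (snd w), snd (snd w)))" "(\<lambda>(w1 :: 'a, w2 :: 'b, w3 :: 'c). w1) = fst"
    by auto
  have f2: "(\<lambda>(w1 :: 'a, w2 :: 'b, w3 :: 'c). (w1, w3)) = (\<lambda>w. (fst w, snd (snd w)))" "(\<lambda>(w1 :: 'a, w2 :: 'b, w3 :: 'c). w2) = (\<lambda>w. fst (snd w))"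
    by auto
  have f3: "(\<lambda>(w1 :: 'a, w2 :: 'b, w3 :: 'c). (w1, w2)) = (\<lambda>w. (fst w, fst (snd w)))" "(\<lambda>(w1 :: 'a, w2 :: 'b, w3 :: 'c). w3) = (\<lambda>w. snd (snd w))"
    by auto
  have inj1: "\<And>x y :: 'a \<times> 'b \<times> 'c. fst x = fst y \<Longrightarrow> fst (snd x) = fst (snd y) \<Longrightarrow> snd (snd x) = snd (snd y) \<Longrightarrow> x = y"
    by (simp add: prod_eq_iff)
  have inj2: "\<And>x y :: 'a \<times> 'b \<times> 'c. fst (snd x) = fst (snd y) \<Longrightarrow> fst x = fst y \<Longrightarrow> snd (snd x) = snd (snd y) \<Longrightarrow> x = y"
    by (simp add: prod_eq_iff)
  have inj3: "\<And>x y :: 'a \<times> 'b \<times> 'c. snd (snd x) = snd (snd y) \<Longrightarrow> fst x = fst y \<Longrightarrow> fst (snd x) = fst (snd y) \<Longrightarrow> x = y"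
    by (simp add: prod_eq_iff)
  have u1: "cond_entropy p (\<lambda>w. (fst (snd w), snd (snd w))) fst \<le> \<kappa> * (log 2 CARD('f) - entropy (q d))"
    if "d = 0 \<or> d = 1" for d
    by (rule rate_bound[where dec = dec1 and i = 1, OF ach inj1 _ that err_user1]) auto
  have u2: "cond_entropy p (\<lambda>w. (fst w, snd (snd w))) (\<lambda>w. fst (snd w)) \<le> \<kappa> * (log 2 CARD('f) - entropy (q d))"
    if "d = 0 \<or> d = 2" for d
    by (rule rate_bound[where dec = dec2 and i = 2, OF ach inj2 _ that err_user2]) auto
  have u3: "cond_entropy p (\<lambda>w. (fst w, fst (snd w))) (\<lambda>w. snd (snd w)) \<le> \<kappa> * (log 2 CARD('f) - entropy (q d))"
    if "d = 0 \<or> d = 3" for d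
    by (rule rate_bound[where dec = dec3 and i = 3, OF ach inj3 _ that err_user3]) auto
  show "cond_entropy p (\<lambda>(w1, w2, w3). (w2, w3)) (\<lambda>(w1, w2, w3). w1)
               / (log 2 (real CARD('f)) - max (entropy (q 0)) (entropy (q 1))) \<le> \<kappa>"
    unfolding f1 by (rule ratio_le[OF u1 u1 E E]) auto
  show "cond_entropy p (\<lambda>(w1, w2, w3). (w1, w3)) (\<lambda>(w1, w2, w3). w2)
               / (log 2 (real CARD('f)) - max (entropy (q 0)) (entropy (q 2))) \<le> \<kappa>"
    unfolding f2 by (rule ratio_le[OF u2 u2 E E]) auto
  show "cond_entropy p (\<lambda>(w1, w2, w3). (w1, w2)) (\<lambda>(w1, w2, w3). w3)
               / (log 2 (real CARD('f)) - max (entropy (q 0)) (entropy (q 3))) \<le> \<kappa>"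
    unfolding f3 by (rule ratio_le[OF u3 u3 E E]) auto
qed

theorem lemma1:
  fixes p :: "('a::finite \<times> 'b::finite \<times> 'c::finite) pmf"
    and q :: "nat \<Rightarrow> ('f::{finite, field}) pmf"
  assumes "\<forall>d<4. entropy (q d) < log 2 (real CARD('f))"
  shows "ereal (Max
           { cond_entropy p (\<lambda>(w1, w2, w3). (w2, w3)) (\<lambda>(w1, w2, w3). w1)
               / (log 2 (real CARD('f)) - max (entropy (q 0)) (entropy (q 1))),
             cond_entropy p (\<lambda>(w1, w2, w3). (w1, w3)) (\<lambda>(w1, w2, w3). w2)
               / (log 2 (real CARD('f)) - max (entropy (q 0)) (entropy (q 2))),
             cond_entropy p (\<lambda>(w1, w2, w3). (w1, w2)) (\<lambda>(w1, w2, w3). w3)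
               / (log 2 (real CARD('f)) - max (entropy (q 0)) (entropy (q 3))) })
         \<le> kappa_star p q"
  unfolding kappa_star_def
  using per_user[OF assms] by (auto intro!: Inf_greatest simp: Max_le_iff)


end
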